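(* Let $(\eta,\theta)\in\mathcal{R}$, let $P(u_m,v_m)$ and $Q(u_M,v_M)$ be the two fold points of the critical manifold $M_{20}$, and suppose the interior equilibrium $E_*=(u_*,v_* )$ exists and satisfies $u_*>u_M$. Then for every sufficiently small $\epsilon>0$, $E_*$ is globally stable for the system $$\frac{du}{dt}=u(1-u)(u+\theta)(u^2+\eta)-u^2v,\qquad \frac{dv}{dt}=\epsilon\big(u^2v-\delta v(u^2+\eta)\big),$$ i.e., it is locally stable and every trajectory starting in the open first quadrant converges to $E_*$ as $t\to\infty$.
   Context: Parameters are $\delta,\theta,\eta>0$. Let $\phi(u)=\frac1u(1-u)(u+\theta)(u^2+\eta)$ and the critical manifold $M_{20}=\{(u,v):u>0,\ v=\phi(u)\}$. Let $\Gamma=9\theta^2+6\theta+9-24\eta$, $\Lambda_1=\frac{\eta}{8}(\theta^2+\frac{22}{3}\theta+1)-\frac{1}{96}(3(1+\theta^4)+2(\theta^2+4\eta^2))$ and $\Lambda_2=\frac{1-\theta}{288}(3\theta^2+2\theta+3-8\eta)$. Define - $\mathcal{R}_1=\{0<\eta<\theta\le1,\ \frac{\sqrt\Gamma}{3}-3<\theta<1+\frac{\sqrt\Gamma}{3},\ \Gamma>(\Lambda_1/\Lambda_2)^2\}$, - $\mathcal{R}_2=\{0<\eta<1<\theta,\ \frac{\sqrt\Gamma}{3}-3<\theta<1+\frac{\sqrt\Gamma}{3},\ \Gamma<(\Lambda_1/\Lambda_2)^2\}$, - $\mathcal{R}_3=\{0<\theta<1<\eta,\ \frac{\sqrt\Gamma}{3}-3<\theta<1,\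 \Gamma>(\Lambda_1/\Lambda_2)^2\}$, and $\mathcal{R}=\mathcal{R}_1\cup\mathcal{R}_2\cup\mathcal{R}_3$. For $(\eta,\theta)\in\mathcal{R}$, $\phi$ has exactly two critical points in $(0,1)$: a local minimum $u_m$ and a local maximum $u_M>u_m$, giving fold points $P=(u_m,\phi(u_m))$ and $Q=(u_M,\phi(u_M))$. The interior equilibrium is $E_*=(u_*,v_* )$ with $u_*=\sqrt{\delta\eta/(1-\delta)}$ and $v_*=\phi(u_* )$. It lies in the open first quadrant when $\delta<1/(1+\eta)$. *)

theory Defs
  imports "HOL-Analysis.Analysis"
begin

definition phi :: "real \<Rightarrow> real \<Rightarrow> real \<Rightarrow> real" where
  "phi \<theta> \<eta> u = (1 / u) * (1 - u) * (u + \<theta>) * (u^2 + \<eta>)"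

definition Gam :: "real \<Rightarrow> real \<Rightarrow> real" where
  "Gam \<theta> \<eta> = 9*\<theta>^2 + 6*\<theta> + 9 - 24*\<eta>"

definition Lam1 :: "real \<Rightarrow> real \<Rightarrow> real" where
  "Lam1 \<theta> \<eta> = \<eta>/8 * (\<theta>^2 + 22/3*\<theta> + 1)
      - 1/96 * (3*(1 + \<theta>^4) + 2*(\<theta>^2 + 4*\<eta>^2))"

definition Lam2 :: "real \<Rightarrow> real \<Rightarrow> real" where
  "Lam2 \<theta> \<eta> = (1 - \<theta>)/288 * (3*\<theta>^2 + 2*\<theta> + 3 - 8*\<eta>)"

definition region_R :: "real \<Rightarrow> real \<Rightarrow> bool" where
  "region_R \<eta> \<theta> \<longleftrightarrow>
     (0 < \<eta> \<and> \<eta> < \<theta> \<and> \<theta> \<le> 1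
       \<and> sqrt (Gam \<theta> \<eta>)/3 - 3 < \<theta> \<and> \<theta> < 1 + sqrt (Gam \<theta> \<eta>)/3
       \<and> Gam \<theta> \<eta> > (Lam1 \<theta> \<eta> / Lam2 \<theta> \<eta>)^2)
   \<or> (0 < \<eta> \<and> \<eta> < 1 \<and> 1 < \<theta>
       \<and> sqrt (Gam \<theta> \<eta>)/3 - 3 < \<theta> \<and> \<theta> < 1 + sqrt (Gam \<theta> \<eta>)/3
       \<and> Gam \<theta> \<eta> < (Lam1 \<theta> \<eta> / Lam2 \<theta> \<eta>)^2)
   \<or> (0 < \<theta> \<and> \<theta> < 1 \<and> 1 < \<eta>
       \<and> sqrt (Gam \<theta> \<eta>)/3 - 3 < \<theta> \<and> \<theta> < 1
       \<and> Gam \<theta> \<eta> > (Lam1 \<theta> \<eta> / Lam2 \<theta> \<eta>)^2)"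

definition fold_max :: "real \<Rightarrow> real \<Rightarrow> real \<Rightarrow> bool" where
  "fold_max \<theta> \<eta> uM \<longleftrightarrow>
     0 < uM \<and> uM < 1 \<and> deriv (phi \<theta> \<eta>) uM = 0
     \<and> (\<exists>r>0. \<forall>u. \<bar>u - uM\<bar> < r \<longrightarrow> phi \<theta> \<eta> u \<le> phi \<theta> \<eta> uM)
     \<and> (\<forall>u. 0 < u \<and> u < 1 \<and> deriv (phi \<theta> \<eta>) u = 0 \<longrightarrow> u \<le> uM)"

definition vfield :: "real \<Rightarrow> real \<Rightarrow> real \<Rightarrow> real \<Rightarrow> real \<times> real \<Rightarrow> real \<times> real" where
  "vfield \<delta> \<theta> \<eta> \<epsilon> p =
     (fst p*(1-fst p)*(fst p+\<theta>)*((fst p)^2+\<eta>) - (fst p)^2 * snd p,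
      \<epsilon> * ((fst p)^2 * snd p - \<delta> * snd p*((fst p)^2+\<eta>)))"

definition is_solution :: "real \<Rightarrow> real \<Rightarrow> real \<Rightarrow> real \<Rightarrow> (real \<Rightarrow> real \<times> real) \<Rightarrow> bool" where
  "is_solution \<delta> \<theta> \<eta> \<epsilon> x \<longleftrightarrow>
     (\<forall>t\<ge>0. (x has_vector_derivative vfield \<delta> \<theta> \<eta> \<epsilon> (x t)) (at t within {0..}))"

definition u_star :: "real \<Rightarrow> real \<Rightarrow> real" where
  "u_star \<delta> \<eta> = sqrt (\<delta>*\<eta>/(1-\<delta>))"

definition E_star :: "real \<Rightarrow> real \<Rightarrow> real \<Rightarrow> real \<times> real" where
  "E_star \<delta> \<theta> \<eta> = (u_star \<delta> \<eta>, phi \<theta> \<eta> (u_star \<delta> \<eta>))"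

definition lyap_stable :: "real \<Rightarrow> real \<Rightarrow> real \<Rightarrow> real \<Rightarrow> real \<times> real \<Rightarrow> bool" where
  "lyap_stable \<delta> \<theta> \<eta> \<epsilon> E \<longleftrightarrow>
     (\<forall>e>0. \<exists>d>0. \<forall>x. is_solution \<delta> \<theta> \<eta> \<epsilon> x \<and> dist (x 0) E < d
        \<longrightarrow> (\<forall>t\<ge>0. dist (x t) E < e))"

end

theory Submission
  imports Defs
begin


lemma deriv_at_pos:
  assumes "(f has_real_derivative D) (at t within {0..})" "t > 0"
  shows "(f has_real_derivative D) (at t)"
proof -
  have "t \<in> interior {0::real..}" using assms(2) by simp
  then have "at t within {0..} = at t" by (rule at_within_interior)
  with assms(1) show ?thesis by simp
qed

lemma deriv_cont:
  assumes "\<And>t. t \<ge> 0 \<Longrightarrow> (f has_real_derivative f' t) (at t within {0..})"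
  shows "continuous_on {0..} f"
  by (rule DERIV_continuous_on[of _ _ f']) (use assms in auto)

lemma mvt_lower:
  fixes f :: "real \<Rightarrow> real"
  assumes der: "\<And>t. t \<ge> 0 \<Longrightarrow> (f has_real_derivative f' t) (at t within {0..})"
    and "0 \<le> a" "a \<le> b" and bnd: "\<And>t. a < t \<Longrightarrow> t < b \<Longrightarrow> m \<le> f' t"
  shows "f a + m * (b - a) \<le> f b"
proof (cases "a = b")
  case True then show ?thesis by simp
next
  case False
  then have ab: "a < b" using assms by simp
  have cont: "continuous_on {a..b} f"
    using continuous_on_subset[OF deriv_cont[OF der]] assms(2) by auto
  have "\<And>x. a < x \<Longrightarrow> x < b \<Longrightarrow> f differentiable (at x)"
    using der deriv_at_pos assms(2) real_differentiable_def
    by (metis less_eq_real_def order_le_less_trans)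
  from MVT[OF ab cont this] obtain l z where z: "a < z" "z < b" "DERIV f z :> l" "f b - f a = (b - a) * l"
    by blast
  have "DERIV f z :> f' z" using der[of z] deriv_at_pos[of f "f' z" z] z assms(2) by simp
  with z(3) have "l = f' z" by (rule DERIV_unique)
  with bnd[OF z(1,2)] z(4) ab show ?thesis
    by (metis diff_ge_0_iff_ge mult.commute mult_left_mono add.commute le_diff_eq less_eq_real_def)
qed

lemma mvt_upper:
  fixes f :: "real \<Rightarrow> real"
  assumes der: "\<And>t. t \<ge> 0 \<Longrightarrow> (f has_real_derivative f' t) (at t within {0..})"
    and "0 \<le> a" "a \<le> b" and bnd: "\<And>t. a < t \<Longrightarrow> t < b \<Longrightarrow> f' t \<le> M"
  shows "f b \<le> f a + M * (b - a)"
proof -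
  have "(- f a) + (- M) * (b - a) \<le> - f b"
    by (rule mvt_lower[where f' = "\<lambda>t. - f' t"]) (use assms in \<open>auto intro: derivative_eq_intros\<close>)
  then show ?thesis by simp
qed

lemma right_neg:
  fixes f :: "real \<Rightarrow> real"
  assumes "(f has_real_derivative D) (at t within {0..})" "t \<ge> 0" "D < 0"
  shows "eventually (\<lambda>s. f s < f t) (at_right t)"
proof -
  obtain d where d: "d > 0" "\<And>h. h > 0 \<Longrightarrow> t + h \<in> {0..} \<Longrightarrow> h < d \<Longrightarrow> f t > f (t + h)"
    using has_real_derivative_neg_dec_right[OF assms(1,3)] by blast
  show ?thesis unfolding eventually_at_right_field
  proof (intro exI[of _ "t + d"] conjI allI impI)
    show "t < t + d" using d by simp
    fix y assume "t < y" "y < t + d"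
    then show "f y < f t" using d(2)[of "y - t"] assms(2) by auto
  qed
qed

lemma right_cont_neg:
  fixes f :: "real \<Rightarrow> real"
  assumes "(f has_real_derivative D) (at t within {0..})" "t \<ge> 0" "f t < 0"
  shows "eventually (\<lambda>s. f s < 0) (at_right t)"
proof -
  have "(f has_real_derivative D) (at t within {t<..})"
    by (rule DERIV_subset[OF assms(1)]) (use assms(2) in auto)
  then have "continuous (at_right t) f" by (rule DERIV_continuous)
  then have "(f \<longlongrightarrow> f t) (at_right t)" by (simp add: continuous_within)
  then show ?thesis using assms(3) by (simp add: order_tendstoD(2))
qed



lemma invariance:
  fixes g :: "'i \<Rightarrow> real \<Rightarrow> real"
  assumes fin: "finite I"
    and der: "\<And>i t. i \<in> I \<Longrightarrow> t \<ge> 0 \<Longrightarrow> (g i has_real_derivative g' i t) (at t within {0..})"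
    and t0: "t0 \<ge> 0" and init: "\<And>i. i \<in> I \<Longrightarrow> g i t0 \<le> 0"
    and bd: "\<And>i t. i \<in> I \<Longrightarrow> t \<ge> t0 \<Longrightarrow> (\<forall>j\<in>I. g j t \<le> 0) \<Longrightarrow> g i t = 0 \<Longrightarrow> g' i t < 0"
  shows "\<forall>t\<ge>t0. \<forall>i\<in>I. g i t \<le> 0"
proof (rule ccontr)
  define B where "B = {t. t \<ge> t0 \<and> (\<exists>i\<in>I. g i t > 0)}"
  assume "\<not> ?thesis"
  then have Bne: "B \<noteq> {}" unfolding B_def by (auto simp: not_le) (meson not_le)
  have Bbdd: "bdd_below B" unfolding B_def by (auto intro: bdd_belowI[of _ t0])
  define s where "s = Inf B"
  have st0: "s \<ge> t0" unfolding s_def using Bne by (auto intro!: cInf_greatest simp: B_def)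
  have before: "\<forall>i\<in>I. g i t \<le> 0" if "t0 \<le> t" "t < s" for t
  proof -
    have "t \<notin> B" using that cInf_lower[OF _ Bbdd, of t] unfolding s_def by force
    then show ?thesis using that unfolding B_def by (auto simp: not_less)
  qed
  have at_s: "\<forall>i\<in>I. g i s \<le> 0"
  proof (cases "s = t0")
    case True then show ?thesis using init by auto
  next
    case False
    with st0 have ss: "s > t0" by simp
    show ?thesis
    proof (rule ballI, rule ccontr)
      fix i assume i: "i \<in> I" and "\<not> g i s \<le> 0"
      then have pos: "g i s > 0" by simp
      have "(g i has_real_derivative g' i s) (at s)"
        using der[OF i, of s] deriv_at_pos ss t0 by simp
      then have "isCont (g i) s" by (rule DERIV_isCont)
      then have "((g i) \<longlongrightarrow> g i s) (at_left s)"
        by (simp add: isCont_def filterlim_at_split)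
      then have "eventually (\<lambda>t. g i t > 0) (at_left s)"
        using pos by (simp add: order_tendstoD(1))
      moreover have "eventually (\<lambda>t. t \<in> {t0<..<s}) (at_left s)"
        using eventually_at_left_real[OF ss] .
      ultimately have "eventually (\<lambda>t. g i t > 0 \<and> t \<in> {t0<..<s}) (at_left s)"
        by (rule eventually_conj)
      then have "\<exists>t. g i t > 0 \<and> t \<in> {t0<..<s}"
        using eventually_happens trivial_limit_at_left_real by blast
      then obtain t where "t > t0" "g i t > 0" "t < s" by auto
      with before[of t] i show False by auto
    qed
  qed
  have s_notB: "s \<notin> B" using at_s unfolding B_def by (auto simp: not_less)
  have ev: "\<forall>i\<in>I. eventually (\<lambda>t. g i t \<le> 0) (at_right s)"
  proof
    fix i assume i: "i \<in> I"
    show "eventually (\<lambda>t. g i t \<le> 0) (at_right s)"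
    proof (cases "g i s = 0")
      case True
      have "g' i s < 0" using bd[OF i st0 at_s True] .
      from right_neg[OF der[OF i] _ this] st0 t0 True
      show ?thesis by (auto elim: eventually_mono)
    next
      case False
      with at_s i have "g i s < 0" by force
      from right_cont_neg[OF der[OF i] _ this] st0 t0
      show ?thesis by (auto elim: eventually_mono)
    qed
  qed
  have "eventually (\<lambda>t. \<forall>i\<in>I. g i t \<le> 0) (at_right s)"
    using ev fin by (simp add: eventually_ball_finite)
  then obtain b where b: "b > s" "\<And>y. y > s \<Longrightarrow> y < b \<Longrightarrow> \<forall>i\<in>I. g i y \<le> 0"
    unfolding eventually_at_right_field by blast
  have "Inf B < b" using b(1) s_def by simp
  then obtain y where y: "y \<in> B" "y < b" using cInf_less_iff[OF Bne Bbdd] by blast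
  have "y \<ge> s" unfolding s_def using cInf_lower[OF y(1) Bbdd] .
  moreover have "y \<noteq> s" using y s_notB by auto
  ultimately have "y > s" by simp
  with b(2)[OF this y(2)] y(1) show False unfolding B_def by force
qed

lemma barrier:
  fixes f :: "real \<Rightarrow> real"
  assumes der: "\<And>t. t \<ge> 0 \<Longrightarrow> (f has_real_derivative f' t) (at t within {0..})"
    and a: "a \<ge> 0" and fa: "f a < K"
    and neg: "\<And>t. t > a \<Longrightarrow> f t < K \<Longrightarrow> f' t \<le> 0"
  shows "\<forall>t\<ge>a. f t \<le> f a"
proof (rule ccontr)
  assume "\<not> ?thesis"
  then obtain t1 where t1: "t1 \<ge> a" "f t1 > f a" by (auto simp: not_le)
  define y where "y = min K (f t1)"
  have y: "y > f a" "y \<le> K" "y \<le> f t1" using fa t1 unfolding y_def by auto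
  define C where "C = {t \<in> {a..t1}. y \<le> f t}"
  have cont: "continuous_on {a..t1} f"
    using continuous_on_subset[OF deriv_cont[OF der]] a by auto
  have "closed C" unfolding C_def
    by (rule continuous_on_closed_Collect_le[OF continuous_on_const cont]) simp
  moreover have "C \<noteq> {}" using t1 y unfolding C_def by auto
  moreover have "bdd_below C" unfolding C_def by (auto intro: bdd_belowI[of _ a])
  ultimately have inC: "Inf C \<in> C" by (rule closed_contains_Inf[rotated 2])
  define s where "s = Inf C"
  have s: "a \<le> s" "s \<le> t1" "y \<le> f s" using inC unfolding s_def C_def by auto
  have sa: "s \<noteq> a" using s y by auto
  have below: "f t < y" if "a \<le> t" "t < s" for t
  proof (rule ccontr)
    assume "\<not> f t < y"
    then have "t \<in> C" using that s unfolding C_def by auto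
    then have "s \<le> t" unfolding s_def by (rule cInf_lower) (auto simp: C_def intro: bdd_belowI[of _ a])
    with that show False by simp
  qed
  have "f s \<le> f a + 0 * (s - a)"
    by (rule mvt_upper[OF der a]) (use s in \<open>auto intro!: neg simp: less_le_trans[OF below y(2)] less_imp_le\<close>)
  with s y show False by simp
qed

lemma positivity:
  fixes f :: "real \<Rightarrow> real"
  assumes der: "\<And>t. t \<ge> 0 \<Longrightarrow> (f has_real_derivative f t * g t) (at t within {0..})"
    and gc: "continuous_on {0..} g" and f0: "f 0 > 0"
  shows "\<forall>t\<ge>0. f t > 0"
proof (rule ccontr)
  assume "\<not> ?thesis"
  then obtain t1 where t1: "t1 \<ge> 0" "f t1 \<le> 0" by (auto simp: not_less)
  define C where "C = {t \<in> {0..t1}. f t \<le> 0}"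
  have cont: "continuous_on {0..t1} f"
    using continuous_on_subset[OF deriv_cont[OF der]] by auto
  have "closed C" unfolding C_def
    by (rule continuous_on_closed_Collect_le[OF cont continuous_on_const]) simp
  moreover have "C \<noteq> {}" using t1 unfolding C_def by auto
  moreover have "bdd_below C" unfolding C_def by (auto intro: bdd_belowI[of _ 0])
  ultimately have inC: "Inf C \<in> C" by (rule closed_contains_Inf[rotated 2])
  define s where "s = Inf C"
  have s: "0 \<le> s" "s \<le> t1" "f s \<le> 0" using inC unfolding s_def C_def by auto
  have above: "f t > 0" if "0 \<le> t" "t < s" for t
  proof (rule ccontr)
    assume "\<not> f t > 0"
    then have "t \<in> C" using that s unfolding C_def by auto
    then have "s \<le> t" unfolding s_def by (rule cInf_lower) (auto simp: C_def intro: bdd_belowI[of _ 0])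
    with that show False by simp
  qed
  have "compact (g ` {0..s})"
    by (rule compact_continuous_image[OF continuous_on_subset[OF gc]]) auto
  then obtain G where G: "\<And>t. t \<in> {0..s} \<Longrightarrow> norm (g t) \<le> G"
    using compact_imp_bounded bounded_iff by (metis imageI)
  define h where "h t = f t * exp (G * t)" for t
  have hder: "(h has_real_derivative (exp (G * t) * (f t * (g t + G)))) (at t within {0..})" if "t \<ge> 0" for t
    unfolding h_def using der[OF that]
    by (auto intro!: derivative_eq_intros simp: algebra_simps)
  have "h 0 + 0 * (s - 0) \<le> h s"
  proof (rule mvt_lower[OF hder])
    fix t assume t: "0 < t" "t < s"
    have "f t > 0" using above t by simp
    moreover have "g t + G \<ge> 0" using G[of t] t by auto
    ultimately show "0 \<le> exp (G * t) * (f t * (g t + G))" by simp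
  qed (use s in auto)
  then have "h s > 0" using f0 by (simp add: h_def)
  then show False using s by (simp add: h_def zero_less_mult_iff)
qed



definition dphi :: "real \<Rightarrow> real \<Rightarrow> real \<Rightarrow> real" where
  "dphi \<theta> \<eta> u = (u * (-(u+\<theta>)*(u^2+\<eta>) + (1-u)*(u^2+\<eta>) + (1-u)*(u+\<theta>)*(2*u))
      - (1-u)*(u+\<theta>)*(u^2+\<eta>)) / u^2"

lemma phi_deriv: "u \<noteq> 0 \<Longrightarrow> (phi \<theta> \<eta> has_real_derivative dphi \<theta> \<eta> u) (at u)"
  unfolding phi_def[abs_def] dphi_def
  apply (rule derivative_eq_intros refl | simp)+
  apply (simp add: field_simps power2_eq_square)
  done

lemma phi_cont: "continuous_on {a..b} (phi \<theta> \<eta>)" if "a > 0" for a b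
  using that unfolding phi_def[abs_def] by (intro continuous_intros) auto

lemma dphi_cont: "continuous_on {a..b} (dphi \<theta> \<eta>)" if "a > 0" for a b
  using that unfolding dphi_def[abs_def] by (intro continuous_intros) auto

lemma phi_pos: "0 < u \<Longrightarrow> u < 1 \<Longrightarrow> 0 < \<theta> \<Longrightarrow> 0 < \<eta> \<Longrightarrow> phi \<theta> \<eta> u > 0"
  unfolding phi_def by (simp add: add_pos_nonneg)

lemma phi_neg: assumes "1 < u" "0 < \<theta>" "0 < \<eta>" shows "phi \<theta> \<eta> u < 0"
proof -
  have "phi \<theta> \<eta> u = (1-u) * ((u+\<theta>)*(u^2+\<eta>)/u)" unfolding phi_def by simp
  moreover have "(u+\<theta>)*(u^2+\<eta>)/u > 0" using assms by (simp add: add_pos_nonneg)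
  moreover have "1 - u < 0" using assms by simp
  ultimately show ?thesis by (metis mult_neg_pos)
qed

lemma phi_one: "phi \<theta> \<eta> 1 = 0" unfolding phi_def by simp

lemma phi_mult: "u > 0 \<Longrightarrow> u*(1-u)*(u+\<theta>)*(u^2+\<eta>) = u^2 * phi \<theta> \<eta> u"
  unfolding phi_def by (simp add: field_simps power2_eq_square)

lemma phi_decr:
  assumes th: "0 < \<theta>" and et: "0 < \<eta>" and fm: "fold_max \<theta> \<eta> uM"
  shows "\<And>p q. uM \<le> p \<Longrightarrow> p < q \<Longrightarrow> q \<le> 1 \<Longrightarrow> phi \<theta> \<eta> q < phi \<theta> \<eta> p"
proof -
  have uM: "0 < uM" "uM < 1" using fm unfolding fold_max_def by auto
  have nz: "dphi \<theta> \<eta> u \<noteq> 0" if "uM < u" "u < 1" for u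
  proof
    assume "dphi \<theta> \<eta> u = 0"
    moreover have "deriv (phi \<theta> \<eta>) u = dphi \<theta> \<eta> u"
      using phi_deriv[of u] that uM by (intro DERIV_imp_deriv) auto
    moreover have "\<forall>u. 0 < u \<and> u < 1 \<and> deriv (phi \<theta> \<eta>) u = 0 \<longrightarrow> u \<le> uM"
      using fm unfolding fold_max_def by blast
    ultimately have "deriv (phi \<theta> \<eta>) u = 0" "0 < u" "\<forall>u. 0 < u \<and> u < 1 \<and> deriv (phi \<theta> \<eta>) u = 0 \<longrightarrow> u \<le> uM"
      using that uM by auto
    then have "u \<le> uM" using that by blast
    then show False using that by simp
  qed
  have neg: "dphi \<theta> \<eta> u < 0" if u1: "uM < u" "u < 1" for u
  proof (rule ccontr)
    assume "\<not> dphi \<theta> \<eta> u < 0"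
    with nz[OF that] have upos: "dphi \<theta> \<eta> u > 0" by simp
    have allpos: "dphi \<theta> \<eta> w > 0" if w: "uM < w" "w < 1" for w
    proof (rule ccontr)
      assume "\<not> dphi \<theta> \<eta> w > 0"
      with nz[OF w] have wneg: "dphi \<theta> \<eta> w < 0" by simp
      have "\<exists>z. min u w \<le> z \<and> z \<le> max u w \<and> dphi \<theta> \<eta> z = 0"
      proof (cases "u \<le> w")
        case True
        then show ?thesis using IVT2'[of "dphi \<theta> \<eta>" w 0 u] dphi_cont[of u w] upos wneg uM \<open>uM < u\<close>
          by (auto simp: min_def max_def)
      next
        case False
        then show ?thesis using IVT'[of "dphi \<theta> \<eta>" w 0 u] dphi_cont[of w u] upos wneg uM w
          by (auto simp: min_def max_def)
      qed
      then obtain z where "min u w \<le> z" "z \<le> max u w" "dphi \<theta> \<eta> z = 0" by blast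
      with nz[of z] u1 w show False by (auto simp: min_def max_def split: if_splits)
    qed
    have "phi \<theta> \<eta> uM < phi \<theta> \<eta> 1"
      by (rule DERIV_pos_imp_increasing_open[OF uM(2)])
         (use allpos phi_deriv phi_cont uM in \<open>auto intro!: exI[of _ "dphi \<theta> \<eta> _"]\<close>)
    then show False using phi_pos[OF uM th et] phi_one by simp
  qed
  fix p q assume pq: "uM \<le> p" "p < q" "q \<le> 1"
  show "phi \<theta> \<eta> q < phi \<theta> \<eta> p"
  proof (rule DERIV_neg_imp_decreasing_open[OF pq(2)])
    fix x assume x: "p < x" "x < q"
    show "\<exists>y. (phi \<theta> \<eta> has_real_derivative y) (at x) \<and> y < 0"
      using phi_deriv[of x \<theta> \<eta>] neg[of x] x pq uM by (intro exI[of _ "dphi \<theta> \<eta> x"]) auto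
  next
    show "continuous_on {p..q} (phi \<theta> \<eta>)" using phi_cont pq uM by auto
  qed
qed



lemma sol_fst:
  assumes "is_solution \<delta> \<theta> \<eta> \<epsilon> x" "t \<ge> 0"
  shows "((\<lambda>t. fst (x t)) has_real_derivative
     fst (x t)*(1-fst (x t))*(fst (x t)+\<theta>)*((fst (x t))^2+\<eta>) - (fst (x t))^2 * snd (x t)) (at t within {0..})"
proof -
  have "(x has_vector_derivative vfield \<delta> \<theta> \<eta> \<epsilon> (x t)) (at t within {0..})"
    using assms unfolding is_solution_def by blast
  then have "(x has_derivative (\<lambda>h. h *\<^sub>R vfield \<delta> \<theta> \<eta> \<epsilon> (x t))) (at t within {0..})"
    by (simp add: has_vector_derivative_def)
  from has_derivative_fst[OF this]
  have "((\<lambda>t. fst (x t)) has_derivative (\<lambda>h. h * fst (vfield \<delta> \<theta> \<eta> \<epsilon> (x t)))) (at t within {0..})"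
    by simp
  then have "((\<lambda>t. fst (x t)) has_real_derivative fst (vfield \<delta> \<theta> \<eta> \<epsilon> (x t))) (at t within {0..})"
    by (simp add: has_field_derivative_def mult_commute_abs)
  then show ?thesis by (simp add: vfield_def)
qed

lemma sol_snd:
  assumes "is_solution \<delta> \<theta> \<eta> \<epsilon> x" "t \<ge> 0"
  shows "((\<lambda>t. snd (x t)) has_real_derivative
     \<epsilon> * ((fst (x t))^2 * snd (x t) - \<delta> * snd (x t)*((fst (x t))^2+\<eta>))) (at t within {0..})"
proof -
  have "(x has_vector_derivative vfield \<delta> \<theta> \<eta> \<epsilon> (x t)) (at t within {0..})"
    using assms unfolding is_solution_def by blast
  then have "(x has_derivative (\<lambda>h. h *\<^sub>R vfield \<delta> \<theta> \<eta> \<epsilon> (x t))) (at t within {0..})"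
    by (simp add: has_vector_derivative_def)
  from has_derivative_snd[OF this]
  have "((\<lambda>t. snd (x t)) has_derivative (\<lambda>h. h * snd (vfield \<delta> \<theta> \<eta> \<epsilon> (x t)))) (at t within {0..})"
    by simp
  then have "((\<lambda>t. snd (x t)) has_real_derivative snd (vfield \<delta> \<theta> \<eta> \<epsilon> (x t))) (at t within {0..})"
    by (simp add: has_field_derivative_def mult_commute_abs)
  then show ?thesis by (simp add: vfield_def)
qed

lemma sol_cont_x:
  assumes "is_solution \<delta> \<theta> \<eta> \<epsilon> x"
  shows "continuous_on {0..} x"
  unfolding continuous_on_eq_continuous_within
  using assms unfolding is_solution_def by (auto intro: has_vector_derivative_continuous)

lemma sol_cont:
  assumes "is_solution \<delta> \<theta> \<eta> \<epsilon> x"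
  shows "continuous_on {0..} (\<lambda>t. fst (x t))" "continuous_on {0..} (\<lambda>t. snd (x t))"
  using deriv_cont[OF sol_fst[OF assms]] deriv_cont[OF sol_snd[OF assms]] by auto

lemma sol_pos:
  assumes sol: "is_solution \<delta> \<theta> \<eta> \<epsilon> x" and u0: "fst (x 0) > 0" and v0: "snd (x 0) > 0"
  shows "\<forall>t\<ge>0. fst (x t) > 0 \<and> snd (x t) > 0"
proof -
  note c = sol_cont_x[OF sol]
  have "\<forall>t\<ge>0. fst (x t) > 0"
  proof (rule positivity[where f="\<lambda>t. fst (x t)" and g="\<lambda>t. (1-fst (x t))*(fst (x t)+\<theta>)*((fst (x t))^2+\<eta>) - fst (x t) * snd (x t)", OF _ _ u0])
    fix t :: real assume "t \<ge> 0"
    from sol_fst[OF sol this]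
    show "((\<lambda>t. fst (x t)) has_real_derivative fst (x t) * ((1-fst (x t))*(fst (x t)+\<theta>)*((fst (x t))^2+\<eta>) - fst (x t) * snd (x t))) (at t within {0..})"
      by (simp add: algebra_simps power2_eq_square)
  next
    show "continuous_on {0..} (\<lambda>t. (1-fst (x t))*(fst (x t)+\<theta>)*((fst (x t))^2+\<eta>) - fst (x t) * snd (x t))"
      using c by (intro continuous_intros)
  qed
  moreover have "\<forall>t\<ge>0. snd (x t) > 0"
  proof (rule positivity[where f="\<lambda>t. snd (x t)" and g="\<lambda>t. \<epsilon> * ((fst (x t))^2 - \<delta> * ((fst (x t))^2+\<eta>))", OF _ _ v0])
    fix t :: real assume "t \<ge> 0"
    from sol_snd[OF sol this]
    show "((\<lambda>t. snd (x t)) has_real_derivative snd (x t) * (\<epsilon> * ((fst (x t))^2 - \<delta> * ((fst (x t))^2+\<eta>)))) (at t within {0..})"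
      by (simp add: algebra_simps power2_eq_square)
  next
    show "continuous_on {0..} (\<lambda>t. \<epsilon> * ((fst (x t))^2 - \<delta> * ((fst (x t))^2+\<eta>)))"
      using c by (intro continuous_intros)
  qed
  ultimately show ?thesis by blast
qed



lemma big_u_deriv:
  fixes u v \<theta> \<eta> :: real
  assumes "u \<ge> 2" "v > 0" "\<theta> > 0" "\<eta> > 0"
  shows "u^2 * (phi \<theta> \<eta> u - v) \<le> -1"
proof -
  have a: "u * (u-1) \<ge> 2 * 1" using assms by (intro mult_mono) auto
  have b: "(u+\<theta>) * (u^2+\<eta>) \<ge> 2 * 4"
  proof (intro mult_mono)
    show "4 \<le> u^2 + \<eta>" using assms power_mono[of 2 u 2] by simp
  qed (use assms in auto)
  have "(u * (u-1)) * ((u+\<theta>) * (u^2+\<eta>)) \<ge> 2 * 8" using a b by (intro mult_mono) auto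
  moreover have "u^2 * phi \<theta> \<eta> u = - ((u * (u-1)) * ((u+\<theta>) * (u^2+\<eta>)))"
    using phi_mult[of u \<theta> \<eta>] assms by (simp add: algebra_simps)
  moreover have "u^2 * v \<ge> 0" using assms by simp
  ultimately show ?thesis by (simp add: algebra_simps)
qed

context
  fixes \<delta> \<theta> \<eta> \<epsilon> us vs c h u2 \<kappa> L :: real
  assumes \<delta>0: "0 < \<delta>" and \<delta>1: "\<delta> < 1" and \<theta>0: "0 < \<theta>" and \<eta>0: "0 < \<eta>" and \<epsilon>0: "0 < \<epsilon>"
    and us0: "0 < us" and us1: "us < 1" and usq: "us^2 * (1-\<delta>) = \<delta> * \<eta>"
    and vs_def: "vs = phi \<theta> \<eta> us"
    and c0: "0 < c" and cu2: "c < u2" and u2us: "u2 < us"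
    and Fa: "\<And>u. c \<le> u \<Longrightarrow> u < us \<Longrightarrow> phi \<theta> \<eta> u > vs"
    and Fb: "\<And>u. us < u \<Longrightarrow> phi \<theta> \<eta> u < vs"
    and hvs: "vs < h" and hc: "h < phi \<theta> \<eta> c"
    and hu2: "phi \<theta> \<eta> u2 < h"
    and Fc: "\<And>u. u2 \<le> u \<Longrightarrow> u \<le> 2 \<Longrightarrow> phi \<theta> \<eta> u \<le> phi \<theta> \<eta> u2"
    and \<kappa>_def: "\<kappa> = (h - phi \<theta> \<eta> u2)/(2 * (2-u2))"
    and L0: "0 < L" and Fd: "\<And>u. 0 < u \<Longrightarrow> u \<le> u2 \<Longrightarrow> L \<le> phi \<theta> \<eta> u"
    and \<epsilon>small: "4 * \<epsilon> * h < \<kappa> * u2^2 * (h - phi \<theta> \<eta> u2)/2"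
begin

lemma vs0: "vs > 0" using phi_pos[OF us0 us1 \<theta>0 \<eta>0] vs_def by simp
lemma h0: "h > 0" using vs0 hvs by simp
lemma \<kappa>0: "\<kappa> > 0" using \<kappa>_def hu2 u2us us1 by simp

lemma dyn:
  assumes sol: "is_solution \<delta> \<theta> \<eta> \<epsilon> x" and u0: "fst (x 0) > 0" and v0: "snd (x 0) > 0" and t: "t \<ge> 0"
  shows "((\<lambda>t. fst (x t)) has_real_derivative (fst (x t))^2 * (phi \<theta> \<eta> (fst (x t)) - snd (x t))) (at t within {0..})"
    and "((\<lambda>t. snd (x t)) has_real_derivative \<epsilon> * (1-\<delta>) * snd (x t) * ((fst (x t))^2 - us^2)) (at t within {0..})"
proof -
  have pos: "fst (x t) > 0" "snd (x t) > 0" using sol_pos[OF sol u0 v0] t by auto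
  have eq1: "fst (x t) * (1-fst (x t)) * (fst (x t)+\<theta>) * ((fst (x t))^2+\<eta>) - (fst (x t))^2 * snd (x t)
      = (fst (x t))^2 * (phi \<theta> \<eta> (fst (x t)) - snd (x t))"
    using phi_mult[OF pos(1), of \<theta> \<eta>] by (simp add: algebra_simps)
  show "((\<lambda>t. fst (x t)) has_real_derivative (fst (x t))^2 * (phi \<theta> \<eta> (fst (x t)) - snd (x t))) (at t within {0..})"
    using sol_fst[OF sol t] unfolding eq1 .
  have eq2: "\<epsilon> * ((fst (x t))^2 * snd (x t) - \<delta> * snd (x t) * ((fst (x t))^2+\<eta>))
      = \<epsilon> * (1-\<delta>) * snd (x t) * ((fst (x t))^2 - us^2)"
  proof -
    have "\<epsilon> * (1-\<delta>) * snd (x t) * ((fst (x t))^2 - us^2) = \<epsilon> * snd (x t) * ((1-\<delta>) * (fst (x t))^2 - us^2 * (1-\<delta>))"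
      by (simp add: algebra_simps)
    also have "\<dots> = \<epsilon> * snd (x t) * ((1-\<delta>) * (fst (x t))^2 - \<delta> * \<eta>)" using usq by simp
    finally show ?thesis by (simp add: algebra_simps)
  qed
  show "((\<lambda>t. snd (x t)) has_real_derivative \<epsilon> * (1-\<delta>) * snd (x t) * ((fst (x t))^2 - us^2)) (at t within {0..})"
    using sol_snd[OF sol t] unfolding eq2 .
qed

lemma u_bound:
  assumes sol: "is_solution \<delta> \<theta> \<eta> \<epsilon> x" and u0: "fst (x 0) > 0" and v0: "snd (x 0) > 0"
  shows "\<exists>t1\<ge>0. \<forall>t\<ge>t1. fst (x t) \<le> 2"
proof -
  note pos = sol_pos[OF sol u0 v0]
  note d = dyn[OF sol u0 v0]
  have "\<exists>t1\<ge>0. fst (x t1) \<le> 2"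
  proof (rule ccontr)
    assume "\<not> ?thesis"
    then have big: "\<And>t. t \<ge> 0 \<Longrightarrow> fst (x t) > 2" by (meson not_le)
    define T where "T = fst (x 0)"
    have "fst (x T) \<le> fst (x 0) + (-1) * (T - 0)"
    proof (rule mvt_upper[OF d(1)])
      fix t assume t: "0 < t" "t < T"
      show "(fst (x t))^2 * (phi \<theta> \<eta> (fst (x t)) - snd (x t)) \<le> -1"
        using big_u_deriv[of "fst (x t)" "snd (x t)" \<theta> \<eta>] big[of t] pos t \<theta>0 \<eta>0 by auto
    qed (use u0 T_def in auto)
    then show False using big[of T] u0 T_def by simp
  qed
  then obtain t1 where t1: "t1 \<ge> 0" "fst (x t1) \<le> 2" by blast
  have "\<forall>t\<ge>t1. \<forall>i\<in>{()}. (\<lambda>i t. fst (x t) - 2) i t \<le> 0"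
  proof (rule invariance[where g' = "\<lambda>i t. (fst (x t))^2 * (phi \<theta> \<eta> (fst (x t)) - snd (x t))"])
    fix i :: unit and t :: real assume "t \<ge> 0"
    show "((\<lambda>t. fst (x t) - 2) has_real_derivative (fst (x t))^2 * (phi \<theta> \<eta> (fst (x t)) - snd (x t))) (at t within {0..})"
      using d(1)[OF \<open>t \<ge> 0\<close>] by (auto intro!: derivative_eq_intros)
  next
    fix i :: unit and t :: real assume "t \<ge> t1" "fst (x t) - 2 = 0"
    then have "fst (x t) = 2" "snd (x t) > 0" using pos t1 by auto
    then show "(fst (x t))^2 * (phi \<theta> \<eta> (fst (x t)) - snd (x t)) < 0"
      using phi_neg[of 2 \<theta> \<eta>] \<theta>0 \<eta>0 by simp
  qed (use t1 in auto)
  then show ?thesis using t1 by auto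
qed

definition inT where
  "inT p \<longleftrightarrow> c \<le> fst p \<and> fst p \<le> 2 \<and> 0 < snd p \<and> snd p \<le> h \<and> snd p + \<kappa> * (fst p - u2) \<le> h"


lemma face4:
  fixes u v :: real
  assumes u: "u2 \<le> u" "u \<le> 2" and v: "0 < v" "v \<le> h" "v + \<kappa> * (u - u2) = h"
  shows "\<epsilon> * (1-\<delta>) * v * (u^2 - us^2) + \<kappa> * (u^2 * (phi \<theta> \<eta> u - v)) < 0"
proof -
  have upos: "u > 0" using u c0 cu2 by simp
  have "(1-\<delta>) * (u^2 - us^2) \<le> (1-\<delta>) * u^2" using \<delta>1 mult_nonneg_nonneg[of "1-\<delta>" "us^2"] by (simp add: algebra_simps)
  also have "\<dots> \<le> u^2" using \<delta>0 mult_nonneg_nonneg[of "\<delta>" "u^2"] by (simp add: algebra_simps)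
  also have "\<dots> \<le> 4" using power_mono[of u 2 2] u upos by simp
  finally have q: "(1-\<delta>) * (u^2 - us^2) \<le> 4" .
  have "\<epsilon> * (1-\<delta>) * v * (u^2 - us^2) = (\<epsilon> * v) * ((1-\<delta>) * (u^2 - us^2))" by (simp add: algebra_simps)
  also have "\<dots> \<le> (\<epsilon> * v) * 4" using q \<epsilon>0 v by (intro mult_left_mono) auto
  also have "\<dots> \<le> (\<epsilon> * h) * 4" using \<epsilon>0 v by (intro mult_right_mono) auto
  finally have A: "\<epsilon> * (1-\<delta>) * v * (u^2 - us^2) \<le> 4 * \<epsilon> * h" by simp
  have k2: "\<kappa> * (2-u2) = (h - phi \<theta> \<eta> u2)/2" using \<kappa>_def u2us us1 by (simp add: field_simps)
  have "\<kappa> * (u - u2) \<le> \<kappa> * (2-u2)" using \<kappa>0 u by (intro mult_left_mono) auto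
  then have vlow: "v \<ge> h - (h - phi \<theta> \<eta> u2)/2" using v(3) k2 by linarith
  have B: "phi \<theta> \<eta> u - v \<le> (phi \<theta> \<eta> u2 - h)/2" using Fc[OF u] vlow by (simp add: field_simps)
  have Bneg: "phi \<theta> \<eta> u - v < 0" using B hu2 by (simp add: field_simps)
  have "u2^2 \<le> u^2" using power_mono[of u2 u 2] u c0 cu2 by simp
  then have "u^2 * (phi \<theta> \<eta> u - v) \<le> u2^2 * (phi \<theta> \<eta> u - v)"
    using Bneg by (intro mult_right_mono_neg) auto
  also have "\<dots> \<le> u2^2 * ((phi \<theta> \<eta> u2 - h)/2)" using B by (intro mult_left_mono) auto
  finally have "\<kappa> * (u^2 * (phi \<theta> \<eta> u - v)) \<le> \<kappa> * (u2^2 * ((phi \<theta> \<eta> u2 - h)/2))"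
    using \<kappa>0 by (intro mult_left_mono) auto
  moreover have "\<kappa> * (u2^2 * ((phi \<theta> \<eta> u2 - h)/2)) = - (\<kappa> * u2^2 * (h - phi \<theta> \<eta> u2)/2)"
    by (simp add: field_simps)
  ultimately have C: "\<kappa> * (u^2 * (phi \<theta> \<eta> u - v)) \<le> - (\<kappa> * u2^2 * (h - phi \<theta> \<eta> u2)/2)" by simp
  show ?thesis using A C \<epsilon>small by linarith
qed

lemma T_inv:
  assumes sol: "is_solution \<delta> \<theta> \<eta> \<epsilon> x" and u0: "fst (x 0) > 0" and v0: "snd (x 0) > 0"
    and t0: "t0 \<ge> 0" "inT (x t0)"
  shows "\<forall>t\<ge>t0. inT (x t)"
proof -
  note pos = sol_pos[OF sol u0 v0]
  note d = dyn[OF sol u0 v0]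
  define du where "du t = (fst (x t))^2 * (phi \<theta> \<eta> (fst (x t)) - snd (x t))" for t
  define dv where "dv t = \<epsilon> * (1-\<delta>) * snd (x t) * ((fst (x t))^2 - us^2)" for t
  define g :: "nat \<Rightarrow> real \<Rightarrow> real" where "g i t = (if i = 1 then fst (x t) - 2 else if i = 2 then c - fst (x t)
      else if i = 3 then snd (x t) - h else snd (x t) + \<kappa> * (fst (x t) - u2) - h)" for i t
  define g' :: "nat \<Rightarrow> real \<Rightarrow> real" where "g' i t = (if i = 1 then du t else if i = 2 then - du t
      else if i = 3 then dv t else dv t + \<kappa> * du t)" for i t
  have "\<forall>t\<ge>t0. \<forall>i\<in>{1,2,3,4}. g i t \<le> 0"
  proof (rule invariance[where g=g and g'=g'])
    fix i :: nat and t :: real assume i: "i \<in> {1,2,3,4}" and t: "t \<ge> 0"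
    note d1 = d(1)[OF t, folded du_def] and d2 = d(2)[OF t, folded dv_def]
    show "(g i has_real_derivative g' i t) (at t within {0..})"
      using i unfolding g_def[abs_def] g'_def
      by (auto intro!: derivative_eq_intros d1 d2)
  next
    fix i :: nat assume i: "i \<in> {1,2,3,4}"
    show "g i t0 \<le> 0" using i t0(2) unfolding g_def inT_def by auto
  next
    fix i :: nat and t :: real assume i: "i \<in> {1,2,3,4}" and t: "t \<ge> t0"
      and all: "\<forall>j\<in>{1,2,3,4}. g j t \<le> 0" and gi: "g i t = 0"
    have vp: "snd (x t) > 0" "fst (x t) > 0" using pos t t0 by auto
    have a1: "fst (x t) \<le> 2" and a2: "c \<le> fst (x t)" and a3: "snd (x t) \<le> h"
      and a4: "snd (x t) + \<kappa> * (fst (x t) - u2) \<le> h"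
      using all unfolding g_def by auto
    consider "i = 1" | "i = 2" | "i = 3" | "i = 4" using i by auto
    then show "g' i t < 0"
    proof cases
      case 1
      then have "fst (x t) = 2" using gi unfolding g_def by simp
      then show ?thesis using 1 phi_neg[of 2 \<theta> \<eta>] \<theta>0 \<eta>0 vp unfolding g'_def du_def by simp
    next
      case 2
      then have "fst (x t) = c" using gi unfolding g_def by simp
      then show ?thesis using 2 hc a3 c0 unfolding g'_def du_def by simp
    next
      case 3
      then have vh: "snd (x t) = h" using gi unfolding g_def by simp
      then have "\<kappa> * (fst (x t) - u2) \<le> 0" using a4 by simp
      then have "fst (x t) \<le> u2" using \<kappa>0 by (simp add: mult_le_0_iff)
      then have "(fst (x t))^2 < us^2" using vp u2us by (intro power_strict_mono) auto
      then show ?thesis using 3 vh h0 \<epsilon>0 \<delta>1 unfolding g'_def dv_def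
        by (simp add: mult_pos_neg)
    next
      case 4
      then have e4: "snd (x t) + \<kappa> * (fst (x t) - u2) = h" using gi unfolding g_def by simp
      then have "\<kappa> * (fst (x t) - u2) \<ge> 0" using a3 by simp
      then have "fst (x t) \<ge> u2" using \<kappa>0 by (simp add: zero_le_mult_iff)
      from face4[OF this a1 vp(1) a3 e4]
      show ?thesis using 4 unfolding g'_def dv_def du_def by (simp add: algebra_simps)
    qed
  qed (use t0 in auto)
  then show ?thesis using pos t0 unfolding g_def inT_def by fastforce
qed


lemma T_entry:
  assumes sol: "is_solution \<delta> \<theta> \<eta> \<epsilon> x" and u0: "fst (x 0) > 0" and v0: "snd (x 0) > 0"
  shows "\<exists>t0\<ge>0. inT (x t0)"
proof (rule ccontr)
  assume "\<not> ?thesis"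
  then have nT: "\<And>t. t \<ge> 0 \<Longrightarrow> \<not> inT (x t)" by blast
  note pos = sol_pos[OF sol u0 v0]
  note d = dyn[OF sol u0 v0]
  obtain t1 where t1: "t1 \<ge> 0" "\<And>t. t \<ge> t1 \<Longrightarrow> fst (x t) \<le> 2"
    using u_bound[OF sol u0 v0] by blast
  have k2: "\<kappa> * (2-u2) = (h - phi \<theta> \<eta> u2)/2" using \<kappa>_def u2us us1 by (simp add: field_simps)
  show False
  proof (cases "\<exists>s\<ge>t1. fst (x s) \<le> u2")
    case True
    then obtain s where s: "s \<ge> t1" "fst (x s) \<le> u2" by blast
    have "\<forall>t\<ge>s. \<forall>i\<in>{()}. (\<lambda>i t. fst (x t) - u2) i t \<le> 0"
    proof (rule invariance[where g' = "\<lambda>i t. (fst (x t))^2 * (phi \<theta> \<eta> (fst (x t)) - snd (x t))"])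
      fix i :: unit and t :: real assume "t \<ge> 0"
      show "((\<lambda>t. fst (x t) - u2) has_real_derivative (fst (x t))^2 * (phi \<theta> \<eta> (fst (x t)) - snd (x t))) (at t within {0..})"
        using d(1)[OF \<open>t \<ge> 0\<close>] by (auto intro!: derivative_eq_intros)
    next
      fix i :: unit and t :: real assume t: "t \<ge> s" "fst (x t) - u2 = 0"
      then have ut: "fst (x t) = u2" and vt: "snd (x t) > 0" using pos s t1 by auto
      have "\<not> inT (x t)" using nT t s t1 by auto
      then have "snd (x t) > h" using ut vt cu2 c0 u2us us1 unfolding inT_def by auto
      then show "(fst (x t))^2 * (phi \<theta> \<eta> (fst (x t)) - snd (x t)) < 0"
        using ut hu2 c0 cu2 by (simp add: mult_pos_neg)
    qed (use s t1 in auto)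
    then have A1: "\<And>t. t \<ge> s \<Longrightarrow> fst (x t) \<le> u2" by auto
    define k where "k = \<epsilon> * (1-\<delta>) * (us^2 - u2^2)"
    have k0: "k > 0" unfolding k_def using \<epsilon>0 \<delta>1 u2us c0 cu2 by (simp add: power_strict_mono)
    have lnder: "((\<lambda>t. ln (snd (x t))) has_real_derivative \<epsilon> * (1-\<delta>) * ((fst (x t))^2 - us^2)) (at t within {0..})"
      if "t \<ge> 0" for t
    proof -
      have "snd (x t) > 0" using pos that by auto
      then show ?thesis using d(2)[OF that] by (auto intro!: derivative_eq_intros simp: field_simps)
    qed
    define m where "m = min h (L/2)"
    have m0: "m > 0" unfolding m_def using h0 L0 by simp
    define s2 where "s2 = s + (\<bar>ln (snd (x s)) - ln m\<bar> + 1)/k"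
    have s2s: "s2 \<ge> s" unfolding s2_def using k0 by simp
    have vsmall: "snd (x t) < m" if t: "t \<ge> s2" for t
    proof -
      have "ln (snd (x t)) \<le> ln (snd (x s)) + (-k) * (t - s)"
      proof (rule mvt_upper[OF lnder])
        fix \<tau> assume \<tau>: "s < \<tau>" "\<tau> < t"
        have "fst (x \<tau>) \<le> u2" "fst (x \<tau>) > 0" using A1[of \<tau>] pos \<tau> s t1 by auto
        then have "(fst (x \<tau>))^2 \<le> u2^2" by (intro power_mono) auto
        then have "(fst (x \<tau>))^2 - us^2 \<le> u2^2 - us^2" by simp
        then have "(\<epsilon> * (1-\<delta>)) * ((fst (x \<tau>))^2 - us^2) \<le> (\<epsilon> * (1-\<delta>)) * (u2^2 - us^2)"
          using \<epsilon>0 \<delta>1 by (intro mult_left_mono) auto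
        then show "\<epsilon> * (1-\<delta>) * ((fst (x \<tau>))^2 - us^2) \<le> -k" unfolding k_def by (simp add: algebra_simps)
      qed (use s t1 s2s t in auto)
      moreover have "k * (t - s) \<ge> \<bar>ln (snd (x s)) - ln m\<bar> + 1"
      proof -
        have "t - s \<ge> (\<bar>ln (snd (x s)) - ln m\<bar> + 1)/k" using t unfolding s2_def by simp
        then have "k * (t - s) \<ge> k * ((\<bar>ln (snd (x s)) - ln m\<bar> + 1)/k)" using k0 by (intro mult_left_mono) auto
        then show ?thesis using k0 by simp
      qed
      ultimately have "ln (snd (x t)) < ln m" by linarith
      then show ?thesis using pos m0 t s2s s t1 by (simp add: ln_less_cancel_iff)
    qed
    have A3: "fst (x t) < c" if t: "t \<ge> s2" for t
    proof (rule ccontr)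
      assume "\<not> fst (x t) < c"
      then have "c \<le> fst (x t)" by simp
      moreover have "fst (x t) \<le> u2" using A1 t s2s by auto
      moreover have "snd (x t) < h" "snd (x t) > 0" using vsmall[OF t] pos t s2s s t1 unfolding m_def by auto
      moreover have "\<kappa> * (fst (x t) - u2) \<le> 0" using \<kappa>0 \<open>fst (x t) \<le> u2\<close> by (simp add: mult_le_0_iff)
      ultimately have "inT (x t)" unfolding inT_def using cu2 u2us us1 by auto
      then show False using nT t s2s s t1 by auto
    qed
    have s20: "s2 \<ge> 0" using s2s s t1 by simp
    have dupos: "(fst (x t))^2 * (phi \<theta> \<eta> (fst (x t)) - snd (x t)) \<ge> (fst (x t))^2 * (L/2)" if t: "t \<ge> s2" for t
    proof -
      have "fst (x t) > 0" using pos t s20 by auto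
      then have "L \<le> phi \<theta> \<eta> (fst (x t))" using Fd A3[OF t] cu2 by simp
      moreover have "snd (x t) \<le> L/2" using vsmall[OF t] unfolding m_def by simp
      ultimately show ?thesis by (intro mult_left_mono) auto
    qed
    define a where "a = fst (x s2)"
    have a0: "a > 0" unfolding a_def using pos s20 by auto
    have mono: "fst (x t) \<ge> a" if t: "t \<ge> s2" for t
    proof -
      have "fst (x s2) + 0 * (t - s2) \<le> fst (x t)"
      proof (rule mvt_lower[OF d(1)])
        fix \<tau> assume "s2 < \<tau>" "\<tau> < t"
        then have "(fst (x \<tau>))^2 * (phi \<theta> \<eta> (fst (x \<tau>)) - snd (x \<tau>)) \<ge> (fst (x \<tau>))^2 * (L/2)"
          using dupos[of \<tau>] by simp
        moreover have "0 \<le> (fst (x \<tau>))^2 * (L/2)" using L0 by simp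
        ultimately show "0 \<le> (fst (x \<tau>))^2 * (phi \<theta> \<eta> (fst (x \<tau>)) - snd (x \<tau>))"
          by linarith
      qed (use s20 t in auto)
      then show ?thesis unfolding a_def by simp
    qed
    define \<tau> where "\<tau> = 2 * c/(a^2 * L)"
    have \<tau>0: "\<tau> > 0" unfolding \<tau>_def using c0 a0 L0 by simp
    have "fst (x s2) + (a^2 * (L/2)) * ((s2 + \<tau>) - s2) \<le> fst (x (s2 + \<tau>))"
    proof (rule mvt_lower[OF d(1)])
      fix r assume r: "s2 < r" "r < s2 + \<tau>"
      have "a^2 \<le> (fst (x r))^2" using mono[of r] r a0 by (intro power_mono) auto
      then have "a^2 * (L/2) \<le> (fst (x r))^2 * (L/2)" using L0 by (intro mult_right_mono) auto
      then show "a^2 * (L/2) \<le> (fst (x r))^2 * (phi \<theta> \<eta> (fst (x r)) - snd (x r))"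
        using dupos[of r] r by linarith
    qed (use s20 \<tau>0 in auto)
    moreover have "(a^2 * (L/2)) * ((s2 + \<tau>) - s2) = c" unfolding \<tau>_def using a0 L0 by (simp add: field_simps)
    ultimately have "fst (x (s2 + \<tau>)) \<ge> a + c" unfolding a_def by simp
    then show False using A3[of "s2 + \<tau>"] \<tau>0 a0 by simp
  next
    case False
    then have big: "\<And>t. t \<ge> t1 \<Longrightarrow> fst (x t) > u2" by (meson not_le)
    define r where "r = u2^2 * ((h - phi \<theta> \<eta> u2)/2)"
    have r0: "r > 0" unfolding r_def using hu2 c0 cu2 by simp
    have du: "(fst (x t))^2 * (phi \<theta> \<eta> (fst (x t)) - snd (x t)) \<le> -r" if t: "t \<ge> t1" for t
    proof -
      have ut: "fst (x t) > u2" "fst (x t) \<le> 2" "snd (x t) > 0" using big[OF t] t1 t pos by auto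
      have "\<not> inT (x t)" using nT t t1 by auto
      moreover have "\<kappa> * (fst (x t) - u2) > 0" using \<kappa>0 ut by simp
      ultimately have "snd (x t) + \<kappa> * (fst (x t) - u2) > h"
        using ut cu2 unfolding inT_def by auto
      moreover have "\<kappa> * (fst (x t) - u2) \<le> \<kappa> * (2 - u2)" using \<kappa>0 ut by (intro mult_left_mono) auto
      ultimately have "snd (x t) > h - (h - phi \<theta> \<eta> u2)/2" using k2 by linarith
      moreover have "phi \<theta> \<eta> (fst (x t)) \<le> phi \<theta> \<eta> u2" using Fc ut by simp
      ultimately have e: "phi \<theta> \<eta> (fst (x t)) - snd (x t) \<le> -((h - phi \<theta> \<eta> u2)/2)"
        by (simp add: field_simps)
      have "u2^2 \<le> (fst (x t))^2" using ut c0 cu2 by (intro power_mono) auto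
      moreover have "(fst (x t))^2 * (phi \<theta> \<eta> (fst (x t)) - snd (x t)) \<le> (fst (x t))^2 * (-((h - phi \<theta> \<eta> u2)/2))"
        using e by (intro mult_left_mono) auto
      moreover have "(fst (x t))^2 * (-((h - phi \<theta> \<eta> u2)/2)) \<le> u2^2 * (-((h - phi \<theta> \<eta> u2)/2))"
        using hu2 \<open>u2^2 \<le> (fst (x t))^2\<close> by (intro mult_right_mono_neg) auto
      ultimately have "(fst (x t))^2 * (phi \<theta> \<eta> (fst (x t)) - snd (x t)) \<le> u2^2 * (-((h - phi \<theta> \<eta> u2)/2))"
        by linarith
      then show ?thesis unfolding r_def by simp
    qed
    define \<tau> where "\<tau> = 2/r"
    have "fst (x (t1 + \<tau>)) \<le> fst (x t1) + (-r) * ((t1 + \<tau>) - t1)"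
      by (rule mvt_upper[OF d(1)]) (use du t1 r0 \<tau>_def in auto)
    moreover have "(-r) * ((t1 + \<tau>) - t1) = -2" unfolding \<tau>_def using r0 by simp
    ultimately have "fst (x (t1 + \<tau>)) \<le> 0" using t1 by fastforce
    moreover have "t1 + \<tau> \<ge> t1" using r0 \<tau>_def by simp
    ultimately show False using big[of "t1 + \<tau>"] c0 cu2 by simp
  qed
qed


definition Wf where
  "Wf p = \<epsilon> * (1-\<delta>) * (fst p + us^2/fst p - 2 * us) + (snd p - vs - vs * (ln (snd p) - ln vs))"

lemma A_nonneg: "u > 0 \<Longrightarrow> u + us^2/u - 2 * us \<ge> 0"
proof -
  assume u: "u > 0"
  have "u + us^2/u - 2 * us = (u - us)^2/u" using u by (simp add: field_simps power2_eq_square)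
  then show ?thesis using u by simp
qed

lemma b_nonneg: "v > 0 \<Longrightarrow> v - vs - vs * (ln v - ln vs) \<ge> 0"
proof -
  assume v: "v > 0"
  have "ln (v/vs) \<le> v/vs - 1" using v vs0 by (intro ln_le_minus_one) simp
  then have "ln v - ln vs \<le> v/vs - 1" using v vs0 by (simp add: ln_div)
  then have "vs * (ln v - ln vs) \<le> vs * (v/vs - 1)" using vs0 by (intro mult_left_mono) auto
  also have "\<dots> = v - vs" using vs0 by (simp add: field_simps)
  finally show ?thesis by simp
qed

lemma Wf_nonneg: "fst p > 0 \<Longrightarrow> snd p > 0 \<Longrightarrow> Wf p \<ge> 0"
  unfolding Wf_def using A_nonneg[of "fst p"] b_nonneg[of "snd p"] \<epsilon>0 \<delta>1
  by (simp add: add_nonneg_nonneg)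

lemma Wf_deriv:
  assumes sol: "is_solution \<delta> \<theta> \<eta> \<epsilon> x" and u0: "fst (x 0) > 0" and v0: "snd (x 0) > 0" and t: "t \<ge> 0"
  shows "((\<lambda>t. Wf (x t)) has_real_derivative
      \<epsilon> * (1-\<delta>) * (((fst (x t))^2 - us^2) * (phi \<theta> \<eta> (fst (x t)) - vs))) (at t within {0..})"
proof -
  note pos = sol_pos[OF sol u0 v0]
  have up: "fst (x t) > 0" and vp: "snd (x t) > 0" using pos t by auto
  define u where "u = fst (x t)"
  define v where "v = snd (x t)"
  have "((\<lambda>t. Wf (x t)) has_real_derivative
      \<epsilon> * (1-\<delta>) * ((1 - us^2/(fst (x t))^2) * ((fst (x t))^2 * (phi \<theta> \<eta> (fst (x t)) - snd (x t))))
      + (1 - vs / snd (x t)) * (\<epsilon> * (1-\<delta>) * snd (x t) * ((fst (x t))^2 - us^2))) (at t within {0..})"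
    unfolding Wf_def using dyn[OF sol u0 v0 t] up vp
    by (auto intro!: derivative_eq_intros simp: field_simps power2_eq_square)
  moreover have "\<epsilon> * (1-\<delta>) * ((1 - us^2/u^2) * (u^2 * (phi \<theta> \<eta> u - v)))
      + (1 - vs / v) * (\<epsilon> * (1-\<delta>) * v * (u^2 - us^2))
      = \<epsilon> * (1-\<delta>) * ((u^2 - us^2) * (phi \<theta> \<eta> u - vs))"
  proof -
    have e1: "(1 - us^2/u^2) * (u^2 * (phi \<theta> \<eta> u - v)) = (u^2 - us^2) * (phi \<theta> \<eta> u - v)"
      using up unfolding u_def by (simp add: field_simps)
    have e2: "(1 - vs / v) * (\<epsilon> * (1-\<delta>) * v * (u^2 - us^2)) = \<epsilon> * (1-\<delta>) * ((v - vs) * (u^2 - us^2))"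
      using vp unfolding v_def by (simp add: field_simps)
    have "\<epsilon> * (1-\<delta>) * ((1 - us^2/u^2) * (u^2 * (phi \<theta> \<eta> u - v)))
      + (1 - vs / v) * (\<epsilon> * (1-\<delta>) * v * (u^2 - us^2))
      = \<epsilon> * (1-\<delta>) * ((u^2 - us^2) * (phi \<theta> \<eta> u - v)) + \<epsilon> * (1-\<delta>) * ((v - vs) * (u^2 - us^2))"
      by (simp only: e1 e2)
    also have "\<dots> = \<epsilon> * (1-\<delta>) * ((u^2 - us^2) * (phi \<theta> \<eta> u - vs))"
      by (simp add: algebra_simps)
    finally show ?thesis .
  qed
  ultimately show ?thesis unfolding u_def v_def by simp
qed

lemma w_sign: "c \<le> u \<Longrightarrow> (u^2 - us^2) * (phi \<theta> \<eta> u - vs) \<le> 0"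
proof -
  assume u: "c \<le> u"
  consider "u < us" | "u = us" | "u > us" by linarith
  then show ?thesis
  proof cases
    case 1
    then have "u^2 < us^2" using u c0 by (intro power_strict_mono) auto
    moreover have "phi \<theta> \<eta> u > vs" using Fa u 1 by simp
    ultimately show ?thesis by (simp add: mult_le_0_iff)
  next
    case 2 then show ?thesis by simp
  next
    case 3
    then have "u^2 > us^2" using us0 by (intro power_strict_mono) auto
    moreover have "phi \<theta> \<eta> u < vs" using Fb 3 by simp
    ultimately show ?thesis by (simp add: mult_le_0_iff)
  qed
qed


definition Mu where "Mu = 2 * ((2+\<theta>) * (4+\<eta>)) + 4 * h"

lemma Mu0: "Mu > 0" unfolding Mu_def using \<theta>0 \<eta>0 h0 by (simp add: add_pos_pos)

lemma du_bound:
  assumes u: "c \<le> u" "u \<le> 2" and v: "0 < v" "v \<le> h"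
  shows "\<bar>u^2 * (phi \<theta> \<eta> u - v)\<bar> \<le> Mu"
proof -
  have up: "u > 0" using u c0 by simp
  have e: "u^2 * (phi \<theta> \<eta> u - v) = (u * (1-u)) * ((u+\<theta>) * (u^2+\<eta>)) - u^2 * v"
    using phi_mult[OF up, of \<theta> \<eta>] by (simp add: algebra_simps)
  have a1: "u * (1-u) \<le> 2" using u up by (simp add: algebra_simps power2_eq_square[symmetric])
      (smt (verit) zero_le_power2)
  have "(2 - u) * (u+1) \<ge> 0" using u up by simp
  then have a2: "u * (1-u) \<ge> -2" by (simp add: algebra_simps)
  have a: "\<bar>u * (1-u)\<bar> \<le> 2" using a1 a2 by simp
  have b0: "(u+\<theta>) * (u^2+\<eta>) \<ge> 0" using up \<theta>0 \<eta>0 by simp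
  have "u^2 \<le> 4" using power_mono[of u 2 2] u up by simp
  then have b: "(u+\<theta>) * (u^2+\<eta>) \<le> (2+\<theta>) * (4+\<eta>)" using u \<theta>0 \<eta>0 up
    by (intro mult_mono) auto
  have "\<bar>(u * (1-u)) * ((u+\<theta>) * (u^2+\<eta>))\<bar> = \<bar>u * (1-u)\<bar> * ((u+\<theta>) * (u^2+\<eta>))"
    by (metis abs_mult abs_of_nonneg b0)
  also have "\<dots> \<le> 2 * ((2+\<theta>) * (4+\<eta>))" by (rule mult_mono[OF a b]) (use b0 in auto)
  finally have P: "\<bar>(u * (1-u)) * ((u+\<theta>) * (u^2+\<eta>))\<bar> \<le> 2 * ((2+\<theta>) * (4+\<eta>))" .
  have Q: "\<bar>u^2 * v\<bar> \<le> 4 * h" using \<open>u^2 \<le> 4\<close> v by (simp add: abs_mult mult_mono)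
  have "\<bar>u^2 * (phi \<theta> \<eta> u - v)\<bar> \<le> \<bar>(u * (1-u)) * ((u+\<theta>) * (u^2+\<eta>))\<bar> + \<bar>u^2 * v\<bar>"
    unfolding e by (rule abs_triangle_ineq4)
  then show ?thesis using P Q unfolding Mu_def by linarith
qed

context
  fixes x t0
  assumes sol: "is_solution \<delta> \<theta> \<eta> \<epsilon> x" and u0: "fst (x 0) > 0" and v0: "snd (x 0) > 0"
    and t0: "t0 \<ge> 0" and allT: "\<And>t. t \<ge> t0 \<Longrightarrow> inT (x t)"
begin

lemma u_lip:
  assumes "t0 \<le> a" "a \<le> b"
  shows "\<bar>fst (x b) - fst (x a)\<bar> \<le> Mu * (b - a)"
proof -
  note d = dyn[OF sol u0 v0]
  have bnd: "\<bar>(fst (x t))^2 * (phi \<theta> \<eta> (fst (x t)) - snd (x t))\<bar> \<le> Mu" if "t \<ge> t0" for t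
    using allT[OF that] du_bound unfolding inT_def by auto
  have "fst (x b) \<le> fst (x a) + Mu * (b - a)"
  proof (rule mvt_upper[OF d(1)])
    fix t assume "a < t" "t < b"
    then have "\<bar>(fst (x t))^2 * (phi \<theta> \<eta> (fst (x t)) - snd (x t))\<bar> \<le> Mu" using bnd assms by simp
    then show "(fst (x t))^2 * (phi \<theta> \<eta> (fst (x t)) - snd (x t)) \<le> Mu" by (simp add: abs_le_iff)
  qed (use assms t0 in auto)
  moreover have "fst (x a) + (-Mu) * (b - a) \<le> fst (x b)"
  proof (rule mvt_lower[OF d(1)])
    fix t assume "a < t" "t < b"
    then have "\<bar>(fst (x t))^2 * (phi \<theta> \<eta> (fst (x t)) - snd (x t))\<bar> \<le> Mu" using bnd assms by simp
    then show "-Mu \<le> (fst (x t))^2 * (phi \<theta> \<eta> (fst (x t)) - snd (x t))" by (simp add: abs_le_iff)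
  qed (use assms t0 in auto)
  ultimately show ?thesis by (simp add: abs_le_iff algebra_simps)
qed

lemma W_drop:
  assumes "t0 \<le> a" "a \<le> b" "\<And>t. a < t \<Longrightarrow> t < b \<Longrightarrow> (us^2 - (fst (x t))^2) * (phi \<theta> \<eta> (fst (x t)) - vs) \<ge> w"
  shows "Wf (x b) \<le> Wf (x a) + (- (\<epsilon> * (1-\<delta>) * w)) * (b - a)"
proof (rule mvt_upper[OF Wf_deriv[OF sol u0 v0]])
  fix t assume t: "a < t" "t < b"
  have "\<epsilon> * (1-\<delta>) * w \<le> \<epsilon> * (1-\<delta>) * ((us^2 - (fst (x t))^2) * (phi \<theta> \<eta> (fst (x t)) - vs))"
    using assms(3)[OF t] \<epsilon>0 \<delta>1 by (intro mult_left_mono) auto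
  then show "\<epsilon> * (1-\<delta>) * (((fst (x t))^2 - us^2) * (phi \<theta> \<eta> (fst (x t)) - vs)) \<le> - (\<epsilon> * (1-\<delta>) * w)"
    by (simp add: algebra_simps)
qed (use assms t0 in auto)

lemma W_mono:
  assumes "t0 \<le> a" "a \<le> b"
  shows "Wf (x b) \<le> Wf (x a)"
proof -
  have "Wf (x b) \<le> Wf (x a) + (- (\<epsilon> * (1-\<delta>) * 0)) * (b - a)"
  proof (rule W_drop[OF assms])
    fix t assume "a < t" "t < b"
    then have "c \<le> fst (x t)" using allT assms unfolding inT_def by auto
    from w_sign[OF this] show "0 \<le> (us^2 - (fst (x t))^2) * (phi \<theta> \<eta> (fst (x t)) - vs)"
      by (simp add: mult_le_0_iff algebra_simps)
  qed
  then show ?thesis by simp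
qed


lemma u_conv:
  assumes r: "r > 0"
  shows "\<exists>N. \<forall>t\<ge>N. \<bar>fst (x t) - us\<bar> < r"
proof (rule ccontr)
  assume "\<not> ?thesis"
  then have often: "\<exists>t\<ge>N. \<bar>fst (x t) - us\<bar> \<ge> r" for N by (meson not_less)
  note pos = sol_pos[OF sol u0 v0]
  define K where "K = {c..us - r/2} \<union> {us + r/2..2}"
  define w where "w y = (us^2 - y^2) * (phi \<theta> \<eta> y - vs)" for y
  have wpos: "w y > 0" if y: "y \<in> K" for y
  proof -
    consider "c \<le> y" "y \<le> us - r/2" | "us + r/2 \<le> y" "y \<le> 2" using y unfolding K_def by auto
    then show ?thesis
    proof cases
      case 1
      then have "y^2 < us^2" using c0 r by (intro power_strict_mono) auto
      moreover have "phi \<theta> \<eta> y > vs" using Fa 1 r by simp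
      ultimately show ?thesis unfolding w_def by simp
    next
      case 2
      then have "y^2 > us^2" using us0 r by (intro power_strict_mono) auto
      moreover have "phi \<theta> \<eta> y < vs" using Fb 2 r by simp
      ultimately show ?thesis unfolding w_def by (simp add: mult_neg_neg)
    qed
  qed
  have "\<exists>wr>0. \<forall>y\<in>K. wr \<le> w y"
  proof (cases "K = {}")
    case True then show ?thesis by (intro exI[of _ 1]) auto
  next
    case False
    have "compact K" unfolding K_def by (intro compact_Un compact_Icc)
    moreover have "continuous_on K w"
    proof (rule continuous_on_subset)
      show "continuous_on {c..2} w" unfolding w_def using phi_cont[OF c0, of 2 \<theta> \<eta>]
        by (intro continuous_intros) auto
      show "K \<subseteq> {c..2}" unfolding K_def using us1 r c0 cu2 u2us by auto
    qed
    ultimately obtain y0 where "y0 \<in> K" "\<forall>y\<in>K. w y0 \<le> w y"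
      using continuous_attains_inf[OF _ False] by blast
    then show ?thesis using wpos by blast
  qed
  then obtain wr where wr: "wr > 0" "\<And>y. y \<in> K \<Longrightarrow> wr \<le> w y" by blast
  define \<tau> where "\<tau> = r/(2 * Mu)"
  have \<tau>0: "\<tau> > 0" unfolding \<tau>_def using r Mu0 by simp
  define D where "D = \<epsilon> * (1-\<delta>) * wr * \<tau>"
  have D0: "D > 0" unfolding D_def using \<epsilon>0 \<delta>1 wr \<tau>0 by simp
  have drop: "Wf (x (t + \<tau>)) \<le> Wf (x t) - D" if t: "t \<ge> t0" "\<bar>fst (x t) - us\<bar> \<ge> r" for t
  proof -
    have "Wf (x (t + \<tau>)) \<le> Wf (x t) + (- (\<epsilon> * (1-\<delta>) * wr)) * ((t + \<tau>) - t)"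
    proof (rule W_drop)
      fix s assume s: "t < s" "s < t + \<tau>"
      have "\<bar>fst (x s) - fst (x t)\<bar> \<le> Mu * (s - t)" using u_lip[of t s] t s by simp
      also have "\<dots> \<le> Mu * \<tau>" using s Mu0 by (intro mult_left_mono) auto
      also have "\<dots> = r/2" unfolding \<tau>_def using Mu0 by simp
      finally have "\<bar>fst (x s) - fst (x t)\<bar> \<le> r/2" .
      then have far: "\<bar>fst (x s) - us\<bar> \<ge> r/2" using t(2) by linarith
      have "inT (x s)" using allT t s by simp
      then have "c \<le> fst (x s)" "fst (x s) \<le> 2" unfolding inT_def by auto
      moreover have "fst (x s) \<le> us - r/2 \<or> us + r/2 \<le> fst (x s)"
      proof (cases "fst (x s) \<le> us")
        case True then have "\<bar>fst (x s) - us\<bar> = us - fst (x s)" by simp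
        with far show ?thesis by linarith
      next
        case False then have "\<bar>fst (x s) - us\<bar> = fst (x s) - us" by simp
        with far show ?thesis by linarith
      qed
      ultimately have "fst (x s) \<in> K" unfolding K_def by auto
      from wr(2)[OF this] show "wr \<le> (us^2 - (fst (x s))^2) * (phi \<theta> \<eta> (fst (x s)) - vs)"
        unfolding w_def .
    qed (use t \<tau>0 in auto)
    then show ?thesis unfolding D_def by (simp add: algebra_simps)
  qed
  have ind: "\<exists>t\<ge>t0. Wf (x t) \<le> Wf (x t0) - real n * D" for n :: nat
  proof (induction n)
    case 0 then show ?case by (intro exI[of _ t0]) auto
  next
    case (Suc n)
    then obtain t where t: "t \<ge> t0" "Wf (x t) \<le> Wf (x t0) - real n * D" by blast
    obtain t' where t': "t' \<ge> t" "\<bar>fst (x t') - us\<bar> \<ge> r" using often by blast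
    have "Wf (x (t' + \<tau>)) \<le> Wf (x t') - D" using drop[of t'] t t' by simp
    also have "\<dots> \<le> Wf (x t) - D" using W_mono[of t t'] t t' by simp
    finally have "Wf (x (t' + \<tau>)) \<le> Wf (x t0) - real (Suc n) * D" using t by (simp add: algebra_simps)
    moreover have "t' + \<tau> \<ge> t0" using t t' \<tau>0 by simp
    ultimately show ?case by blast
  qed
  define n where "n = nat \<lceil>Wf (x t0) / D\<rceil> + 1"
  have "real n > Wf (x t0) / D" unfolding n_def by linarith
  then have nD: "real n * D > Wf (x t0)" using D0 by (simp add: field_simps)
  obtain t where t: "t \<ge> t0" "Wf (x t) \<le> Wf (x t0) - real n * D" using ind by blast
  have "Wf (x t) \<ge> 0" using Wf_nonneg pos t t0 by simp
  with t nD show False by linarith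
qed

definition Mv where "Mv = 4 * \<epsilon> * h"

lemma v_lip:
  assumes "t0 \<le> a" "a \<le> b"
  shows "\<bar>snd (x b) - snd (x a)\<bar> \<le> Mv * (b - a)"
proof -
  note d = dyn[OF sol u0 v0]
  have bnd: "\<bar>\<epsilon> * (1-\<delta>) * snd (x t) * ((fst (x t))^2 - us^2)\<bar> \<le> Mv" if "t \<ge> t0" for t
  proof -
    have T: "c \<le> fst (x t)" "fst (x t) \<le> 2" "0 < snd (x t)" "snd (x t) \<le> h"
      using allT[OF that] unfolding inT_def by auto
    have "(fst (x t))^2 \<le> 4" using power_mono[of "fst (x t)" 2 2] T c0 by simp
    moreover have "us^2 \<le> 1" using us0 us1 by (simp add: power_le_one)
    moreover have "0 \<le> (fst (x t))^2" "0 \<le> us^2" by simp_all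
    ultimately have q: "\<bar>(fst (x t))^2 - us^2\<bar> \<le> 4"
      unfolding abs_le_iff by (intro conjI) linarith+
    have "\<bar>\<epsilon> * (1-\<delta>) * snd (x t) * ((fst (x t))^2 - us^2)\<bar> = (\<epsilon> * (1-\<delta>) * snd (x t)) * \<bar>(fst (x t))^2 - us^2\<bar>"
      using \<epsilon>0 \<delta>1 T by (simp add: abs_mult)
    also have "\<dots> \<le> (\<epsilon> * (1-\<delta>) * snd (x t)) * 4" using q \<epsilon>0 \<delta>1 T by (intro mult_left_mono) auto
    also have "\<dots> \<le> (\<epsilon> * 1 * h) * 4" using \<epsilon>0 \<delta>0 \<delta>1 T
      by (intro mult_right_mono mult_mono) auto
    finally show ?thesis unfolding Mv_def by simp
  qed
  have "snd (x b) \<le> snd (x a) + Mv * (b - a)"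
  proof (rule mvt_upper[OF d(2)])
    fix t assume "a < t" "t < b"
    then have "\<bar>\<epsilon> * (1-\<delta>) * snd (x t) * ((fst (x t))^2 - us^2)\<bar> \<le> Mv" using bnd assms by simp
    then show "\<epsilon> * (1-\<delta>) * snd (x t) * ((fst (x t))^2 - us^2) \<le> Mv" by (simp add: abs_le_iff)
  qed (use assms t0 in auto)
  moreover have "snd (x a) + (-Mv) * (b - a) \<le> snd (x b)"
  proof (rule mvt_lower[OF d(2)])
    fix t assume "a < t" "t < b"
    then have "\<bar>\<epsilon> * (1-\<delta>) * snd (x t) * ((fst (x t))^2 - us^2)\<bar> \<le> Mv" using bnd assms by simp
    then show "-Mv \<le> \<epsilon> * (1-\<delta>) * snd (x t) * ((fst (x t))^2 - us^2)" by (simp add: abs_le_iff)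
  qed (use assms t0 in auto)
  ultimately show ?thesis by (simp add: abs_le_iff algebra_simps)
qed


lemma v_conv:
  assumes r: "r > 0"
  shows "\<exists>N. \<forall>t\<ge>N. \<bar>snd (x t) - vs\<bar> < r"
proof (rule ccontr)
  assume "\<not> ?thesis"
  then have often: "\<exists>t\<ge>N. \<bar>snd (x t) - vs\<bar> \<ge> r" for N by (meson not_less)
  note d = dyn[OF sol u0 v0]
  have Mv0: "Mv > 0" unfolding Mv_def using \<epsilon>0 h0 by simp
  have "isCont (phi \<theta> \<eta>) us" using phi_deriv[of us \<theta> \<eta>] us0 by (intro DERIV_isCont) auto
  then have H: "\<forall>e>0. \<exists>d>0. \<forall>y. dist y us < d \<longrightarrow> dist (phi \<theta> \<eta> y) (phi \<theta> \<eta> us) < e"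
    unfolding continuous_at_eps_delta .
  have r4: "r/4 > 0" using r by simp
  obtain \<zeta>1 where \<zeta>1': "\<zeta>1 > 0" "\<forall>y. dist y us < \<zeta>1 \<longrightarrow> dist (phi \<theta> \<eta> y) (phi \<theta> \<eta> us) < r/4"
    using H[rule_format, OF r4] by blast
  have \<zeta>1: "\<zeta>1 > 0" "\<And>y. \<bar>y - us\<bar> < \<zeta>1 \<Longrightarrow> \<bar>phi \<theta> \<eta> y - vs\<bar> < r/4"
    using \<zeta>1' unfolding dist_real_def vs_def by auto
  define \<tau> where "\<tau> = r/(2 * Mv)"
  have \<tau>0: "\<tau> > 0" unfolding \<tau>_def using r Mv0 by simp
  define \<zeta> where "\<zeta> = min \<zeta>1 (c^2 * r * \<tau>/16)"
  have \<zeta>0: "\<zeta> > 0" unfolding \<zeta>_def using \<zeta>1 c0 r \<tau>0 by simp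
  have \<zeta>le: "2 * \<zeta> \<le> c^2 * r * \<tau>/8" unfolding \<zeta>_def by linarith
  obtain N where N: "\<And>t. t \<ge> N \<Longrightarrow> \<bar>fst (x t) - us\<bar> < \<zeta>" using u_conv[OF \<zeta>0] by blast
  obtain t where t: "t \<ge> max N t0" "\<bar>snd (x t) - vs\<bar> \<ge> r" using often by blast
  have tt0: "t \<ge> t0" "t \<ge> N" using t by auto
  have near: "\<bar>snd (x s) - snd (x t)\<bar> \<le> r/2" if "t \<le> s" "s \<le> t + \<tau>" for s
  proof -
    have "\<bar>snd (x s) - snd (x t)\<bar> \<le> Mv * (s - t)" using v_lip[of t s] that tt0 by simp
    also have "\<dots> \<le> Mv * \<tau>" using that Mv0 by (intro mult_left_mono) auto
    also have "\<dots> = r/2" unfolding \<tau>_def using Mv0 by simp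
    finally show ?thesis .
  qed
  have phinear: "\<bar>phi \<theta> \<eta> (fst (x s)) - vs\<bar> < r/4" if "t \<le> s" for s
    using \<zeta>1(2) N[of s] that tt0 unfolding \<zeta>_def by simp
  have csq: "c^2 \<le> (fst (x s))^2" if "t \<le> s" for s
  proof -
    have "c \<le> fst (x s)" using allT[of s] that tt0 unfolding inT_def by auto
    then show ?thesis using c0 by (intro power_mono) auto
  qed
  have uend: "\<bar>fst (x (t + \<tau>)) - fst (x t)\<bar> < 2 * \<zeta>"
    using N[of t] N[of "t + \<tau>"] tt0 \<tau>0 by simp
  have "snd (x t) - vs \<ge> r \<or> vs - snd (x t) \<ge> r"
  proof (cases "snd (x t) \<ge> vs")
    case True then have "\<bar>snd (x t) - vs\<bar> = snd (x t) - vs" by simp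
    with t show ?thesis by linarith
  next
    case False then have "\<bar>snd (x t) - vs\<bar> = vs - snd (x t)" by simp
    with t show ?thesis by linarith
  qed
  then show False
  proof
    assume hi: "snd (x t) - vs \<ge> r"
    have "fst (x (t + \<tau>)) \<le> fst (x t) + (- (c^2 * (r/4))) * ((t + \<tau>) - t)"
    proof (rule mvt_upper[OF d(1)])
      fix s assume s: "t < s" "s < t + \<tau>"
      have nr: "\<bar>snd (x s) - snd (x t)\<bar> \<le> r/2" using near[of s] s by simp
      have "snd (x s) - vs \<ge> r/2" using nr hi unfolding abs_le_iff by linarith
      moreover have pn: "\<bar>phi \<theta> \<eta> (fst (x s)) - vs\<bar> < r/4" using phinear[of s] s by simp
      moreover have "phi \<theta> \<eta> (fst (x s)) - vs < r/4" using pn unfolding abs_less_iff by linarith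
      ultimately have e: "phi \<theta> \<eta> (fst (x s)) - snd (x s) \<le> -(r/4)" by linarith
      have "(fst (x s))^2 * (phi \<theta> \<eta> (fst (x s)) - snd (x s)) \<le> (fst (x s))^2 * (-(r/4))"
        using e by (intro mult_left_mono) auto
      also have "\<dots> \<le> c^2 * (-(r/4))" using csq[of s] s r by (intro mult_right_mono_neg) auto
      finally show "(fst (x s))^2 * (phi \<theta> \<eta> (fst (x s)) - snd (x s)) \<le> - (c^2 * (r/4))" by simp
    qed (use tt0 t0 \<tau>0 in auto)
    then have "fst (x t) - fst (x (t + \<tau>)) \<ge> c^2 * r * \<tau>/4" by (simp add: algebra_simps)
    moreover have "c^2 * r * \<tau>/4 > c^2 * r * \<tau>/8" using c0 r \<tau>0 by simp
    ultimately show False using uend \<zeta>le by (simp add: abs_less_iff)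
  next
    assume lo: "vs - snd (x t) \<ge> r"
    have "fst (x t) + (c^2 * (r/4)) * ((t + \<tau>) - t) \<le> fst (x (t + \<tau>))"
    proof (rule mvt_lower[OF d(1)])
      fix s assume s: "t < s" "s < t + \<tau>"
      have nr: "\<bar>snd (x s) - snd (x t)\<bar> \<le> r/2" using near[of s] s by simp
      have "vs - snd (x s) \<ge> r/2" using nr lo unfolding abs_le_iff by linarith
      moreover have pn: "\<bar>phi \<theta> \<eta> (fst (x s)) - vs\<bar> < r/4" using phinear[of s] s by simp
      moreover have "phi \<theta> \<eta> (fst (x s)) - vs > -(r/4)" using pn unfolding abs_less_iff by linarith
      ultimately have e: "phi \<theta> \<eta> (fst (x s)) - snd (x s) \<ge> r/4" by linarith
      have "c^2 * (r/4) \<le> (fst (x s))^2 * (r/4)" using csq[of s] s r by (intro mult_right_mono) auto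
      also have "\<dots> \<le> (fst (x s))^2 * (phi \<theta> \<eta> (fst (x s)) - snd (x s))"
        using e by (intro mult_left_mono) auto
      finally show "c^2 * (r/4) \<le> (fst (x s))^2 * (phi \<theta> \<eta> (fst (x s)) - snd (x s))" .
    qed (use tt0 t0 \<tau>0 in auto)
    then have "fst (x (t + \<tau>)) - fst (x t) \<ge> c^2 * r * \<tau>/4" by (simp add: algebra_simps)
    moreover have "c^2 * r * \<tau>/4 > c^2 * r * \<tau>/8" using c0 r \<tau>0 by simp
    ultimately show False using uend \<zeta>le by (simp add: abs_less_iff)
  qed
qed

lemma conv: "(x \<longlongrightarrow> (us, vs)) at_top"
proof -
  have 1: "((\<lambda>t. fst (x t)) \<longlongrightarrow> us) at_top"
    unfolding tendsto_iff dist_real_def eventually_at_top_linorder using u_conv by blast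
  have 2: "((\<lambda>t. snd (x t)) \<longlongrightarrow> vs) at_top"
    unfolding tendsto_iff dist_real_def eventually_at_top_linorder using v_conv by blast
  from tendsto_Pair[OF 1 2] show ?thesis by simp
qed

end


lemma A_decr:
  assumes "0 < u" "u \<le> c"
  shows "u + us^2/u - 2 * us \<ge> c + us^2/c - 2 * us"
proof -
  have "(u + us^2/u - 2 * us) - (c + us^2/c - 2 * us) = (c - u) * (us^2 - u * c)/(u * c)"
    using assms c0 by (simp add: field_simps power2_eq_square)
  moreover have "u * c \<le> c * c" using assms c0 by (intro mult_right_mono) auto
  moreover have "c * c < us * us" using c0 cu2 u2us by (intro mult_strict_mono) auto
  ultimately have "u * c \<le> us * us" by linarith
  then have "(c - u) * (us^2 - u * c)/(u * c) \<ge> 0"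
    using assms c0 by (intro divide_nonneg_pos mult_nonneg_nonneg) (auto simp: power2_eq_square)
  with \<open>(u + us^2/u - 2 * us) - (c + us^2/c - 2 * us) = (c - u) * (us^2 - u * c)/(u * c)\<close>
  have "(u + us^2/u - 2 * us) - (c + us^2/c - 2 * us) \<ge> 0" by simp
  then show ?thesis by simp
qed

lemma A_c_pos: "c + us^2/c - 2 * us > 0"
proof -
  have "c + us^2/c - 2 * us = (c - us)^2/c" using c0 by (simp add: field_simps power2_eq_square)
  then show ?thesis using c0 cu2 u2us by simp
qed

lemma near_u:
  assumes u: "0 < u" and A: "u + us^2/u - 2 * us < q" and q: "q \<le> 1"
  shows "(u - us)^2 < (2 * us+1) * q"
proof -
  have A0: "u + us^2/u - 2 * us \<ge> 0" using A_nonneg[OF u] .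
  have e: "(u - us)^2 = u * (u + us^2/u - 2 * us)" using u by (simp add: field_simps power2_eq_square)
  have "us^2/u \<ge> 0" using u by simp
  then have "u \<le> (u + us^2/u - 2 * us) + 2 * us" by simp
  then have ub: "u \<le> 2 * us + 1" using A q by linarith
  have "u * (u + us^2/u - 2 * us) \<le> (2 * us+1) * (u + us^2/u - 2 * us)" using ub A0 by (intro mult_right_mono)
  also have "\<dots> < (2 * us+1) * q" using A us0 by (intro mult_strict_left_mono) auto
  finally show ?thesis using e by simp
qed

lemma b_sqrt:
  assumes v: "0 < v"
  shows "v - vs - vs * (ln v - ln vs) \<ge> (sqrt v - sqrt vs)^2"
proof -
  have sv: "sqrt v > 0" "sqrt vs > 0" using v vs0 by auto
  have "ln (sqrt v / sqrt vs) \<le> sqrt v / sqrt vs - 1" using sv by (intro ln_le_minus_one) simp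
  then have l2: "2 * ln (sqrt v / sqrt vs) \<le> 2 * (sqrt v / sqrt vs - 1)" by simp
  have "ln (sqrt v / sqrt vs) = (ln v - ln vs)/2" using sv v vs0 by (simp add: ln_div ln_sqrt)
  then have "ln v - ln vs = 2 * ln (sqrt v / sqrt vs)" by simp
  with l2 have "ln v - ln vs \<le> 2 * (sqrt v / sqrt vs - 1)" by simp
  then have "vs * (ln v - ln vs) \<le> vs * (2 * (sqrt v / sqrt vs - 1))" using vs0 by (intro mult_left_mono) auto
  also have "\<dots> = 2 * (sqrt v * sqrt vs) - 2 * vs"
    using sv vs0 by (simp add: field_simps)
  finally have "vs * (ln v - ln vs) \<le> 2 * (sqrt v * sqrt vs) - 2 * vs" .
  moreover have "(sqrt v - sqrt vs)^2 = v + vs - 2 * (sqrt v * sqrt vs)"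
    using v vs0 by (simp add: power2_diff)
  ultimately show ?thesis by linarith
qed

lemma near_v:
  assumes v: "0 < v" and B: "v - vs - vs * (ln v - ln vs) < q" and q: "q \<le> 1"
  shows "(v - vs)^2 < q * (2 * sqrt vs + 1)^2"
proof -
  define s where "s = sqrt v - sqrt vs"
  have s2: "s^2 < q" using b_sqrt[OF v] B unfolding s_def by linarith
  then have "s^2 < 1^2" using q by simp
  then have "\<bar>s\<bar> < 1" using power_less_imp_less_base[of "\<bar>s\<bar>" 2 1] by simp
  then have sv: "sqrt v + sqrt vs \<le> 2 * sqrt vs + 1" unfolding s_def by (simp add: abs_less_iff)
  have sv0: "0 \<le> sqrt v + sqrt vs" using v vs0 by simp
  have e: "(v - vs)^2 = s^2 * (sqrt v + sqrt vs)^2"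
  proof -
    have "v - vs = s * (sqrt v + sqrt vs)" unfolding s_def using v vs0
      by (simp add: algebra_simps)
    then show ?thesis by (simp add: power_mult_distrib)
  qed
  have "(sqrt v + sqrt vs)^2 \<le> (2 * sqrt vs + 1)^2" using sv sv0 by (intro power_mono) auto
  then have "s^2 * (sqrt v + sqrt vs)^2 \<le> s^2 * (2 * sqrt vs + 1)^2" by (intro mult_left_mono) auto
  also have "\<dots> < q * (2 * sqrt vs + 1)^2"
  proof (rule mult_strict_right_mono[OF s2])
    have "2 * sqrt vs + 1 > 0" using vs0 by (simp add: add_pos_pos)
    then show "0 < (2 * sqrt vs + 1)^2" by simp
  qed
  finally show ?thesis using e by simp
qed

lemma Wf_cont: "isCont Wf (us, vs)"
  unfolding Wf_def using us0 vs0 by (intro continuous_intros) auto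

lemma lyap: "lyap_stable \<delta> \<theta> \<eta> \<epsilon> (us, vs)"
  unfolding lyap_stable_def
proof (intro allI impI)
  fix e :: real assume e: "e > 0"
  define r where "r = e/2"
  have r0: "r > 0" unfolding r_def using e by simp
  define k where "k = \<epsilon> * (1-\<delta>)"
  have k0: "k > 0" unfolding k_def using \<epsilon>0 \<delta>1 by simp
  define qA where "qA = min 1 (r^2/(2 * (2 * us+1)))"
  define qB where "qB = min 1 (r^2/(2 * (2 * sqrt vs + 1)^2))"
  have qA: "qA > 0" "qA \<le> 1" unfolding qA_def using r0 us0 by auto
  have "(2 * us+1) * qA \<le> (2 * us+1) * (r^2/(2 * (2 * us+1)))" unfolding qA_def using us0
    by (intro mult_left_mono) auto
  also have "\<dots> = r^2/2" using us0 by (simp add: field_simps)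
  finally have qA3: "(2 * us+1) * qA \<le> r^2/2" .
  have sq1: "2 * sqrt vs + 1 > 0" using vs0 by (simp add: add_pos_nonneg)
  then have sq0: "(2 * sqrt vs + 1)^2 > 0" by simp
  have qB: "qB > 0" "qB \<le> 1" unfolding qB_def using r0 sq0 by auto
  have "qB * (2 * sqrt vs + 1)^2 \<le> (r^2/(2 * (2 * sqrt vs + 1)^2)) * (2 * sqrt vs + 1)^2"
    unfolding qB_def using sq0 by (intro mult_right_mono) auto
  also have "\<dots> = r^2/2" using sq0 by simp
  finally have qB3: "qB * (2 * sqrt vs + 1)^2 \<le> r^2/2" .
  define V0 where "V0 = min (k * (c + us^2/c - 2 * us)) (min (k * qA) qB)"
  have V0: "V0 > 0" unfolding V0_def using k0 qA qB A_c_pos by simp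
  have Wf0: "Wf (us, vs) = 0" unfolding Wf_def using us0 by (simp add: field_simps power2_eq_square)
  obtain d0 where d0: "d0 > 0" "\<And>p. dist p (us, vs) < d0 \<Longrightarrow> dist (Wf p) (Wf (us, vs)) < V0"
    using Wf_cont V0 unfolding continuous_at_eps_delta by blast
  define d where "d = min d0 (min us vs)"
  have d: "d > 0" unfolding d_def using d0 us0 vs0 by simp
  have V0c: "V0 \<le> k * (c + us^2/c - 2 * us)" unfolding V0_def by (rule min.cobounded1)
  have V0A: "V0 \<le> k * qA" unfolding V0_def by (meson min.cobounded1 min.cobounded2 order_trans)
  have V0B: "V0 \<le> qB" unfolding V0_def by (meson min.cobounded2 order_trans)
  have Wsplit: "Wf p = k * (fst p + us^2/fst p - 2 * us) + (snd p - vs - vs * (ln (snd p) - ln vs))" for p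
    unfolding Wf_def k_def by simp
  show "\<exists>d>0. \<forall>x. is_solution \<delta> \<theta> \<eta> \<epsilon> x \<and> dist (x 0) (us, vs) < d \<longrightarrow> (\<forall>t\<ge>0. dist (x t) (us, vs) < e)"
  proof (intro exI[of _ d] conjI allI impI d)
    fix x t assume H: "is_solution \<delta> \<theta> \<eta> \<epsilon> x \<and> dist (x 0) (us, vs) < d" and t: "t \<ge> (0::real)"
    then have sol: "is_solution \<delta> \<theta> \<eta> \<epsilon> x" and dx: "dist (x 0) (us, vs) < d" by auto
    have "dist (fst (x 0)) us < d" using dist_fst_le[of "x 0" "(us, vs)"] dx by simp
    then have u0: "fst (x 0) > 0" unfolding d_def dist_real_def by (simp add: abs_less_iff)
    have "dist (snd (x 0)) vs < d" using dist_snd_le[of "x 0" "(us, vs)"] dx by simp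
    then have v0: "snd (x 0) > 0" unfolding d_def dist_real_def by (simp add: abs_less_iff)
    have W0: "Wf (x 0) < V0" using d0(2)[of "x 0"] dx Wf0 unfolding d_def dist_real_def by simp
    note pos = sol_pos[OF sol u0 v0]
    have "\<forall>t\<ge>0. Wf (x t) \<le> Wf (x 0)"
    proof (rule barrier[where f = "\<lambda>t. Wf (x t)" and a = 0 and K = V0
        and f' = "\<lambda>t. \<epsilon> * (1-\<delta>) * (((fst (x t))^2 - us^2) * (phi \<theta> \<eta> (fst (x t)) - vs))"])
      show "\<And>t. t \<ge> 0 \<Longrightarrow> ((\<lambda>t. Wf (x t)) has_real_derivative
          \<epsilon> * (1-\<delta>) * (((fst (x t))^2 - us^2) * (phi \<theta> \<eta> (fst (x t)) - vs))) (at t within {0..})"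
        by (rule Wf_deriv[OF sol u0 v0])
      show "(0::real) \<le> 0" by simp
      show "Wf (x 0) < V0" by (rule W0)
    next
      fix t :: real assume t: "t > 0" "Wf (x t) < V0"
      have pt: "fst (x t) > 0" "snd (x t) > 0" using pos t by auto
      have "k * (fst (x t) + us^2/fst (x t) - 2 * us) < k * (c + us^2/c - 2 * us)"
        using Wsplit[of "x t"] b_nonneg[OF pt(2)] t(2) V0c by linarith
      then have "fst (x t) + us^2/fst (x t) - 2 * us < c + us^2/c - 2 * us" using k0 by simp
      then have "c \<le> fst (x t)"
      proof (rule contrapos_pp)
        assume "\<not> c \<le> fst (x t)"
        then have "fst (x t) \<le> c" by simp
        from A_decr[OF pt(1) this]
        show "\<not> fst (x t) + us^2/fst (x t) - 2 * us < c + us^2/c - 2 * us" by simp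
      qed
      from w_sign[OF this] show "\<epsilon> * (1-\<delta>) * (((fst (x t))^2 - us^2) * (phi \<theta> \<eta> (fst (x t)) - vs)) \<le> 0"
        using \<epsilon>0 \<delta>1 by (simp add: mult_le_0_iff)
    qed
    then have Wt: "Wf (x t) < V0" using t W0 by fastforce
    have pt: "fst (x t) > 0" "snd (x t) > 0" using pos t by auto
    have An: "fst (x t) + us^2/fst (x t) - 2 * us \<ge> 0" using A_nonneg[OF pt(1)] .
    have Bn: "snd (x t) - vs - vs * (ln (snd (x t)) - ln vs) \<ge> 0" using b_nonneg[OF pt(2)] .
    have "k * (fst (x t) + us^2/fst (x t) - 2 * us) < k * qA"
      using Wt Bn Wsplit[of "x t"] V0A by linarith
    then have "fst (x t) + us^2/fst (x t) - 2 * us < qA" using k0 by simp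
    from near_u[OF pt(1) this qA(2)] qA3 have u2: "(fst (x t) - us)^2 < r^2"
      using zero_less_power[OF r0, of 2] by linarith
    have "snd (x t) - vs - vs * (ln (snd (x t)) - ln vs) < qB"
      using Wt An k0 Wsplit[of "x t"] V0B mult_nonneg_nonneg[of k "fst (x t) + us^2/fst (x t) - 2 * us"] by linarith
    from near_v[OF pt(2) this qB(2)] qB3 have v2: "(snd (x t) - vs)^2 < r^2"
      using zero_less_power[OF r0, of 2] by linarith
    have du: "\<bar>fst (x t) - us\<bar> < r" using u2 r0 power_less_imp_less_base[of "\<bar>fst (x t) - us\<bar>" 2 r] by simp
    have dv: "\<bar>snd (x t) - vs\<bar> < r" using v2 r0 power_less_imp_less_base[of "\<bar>snd (x t) - vs\<bar>" 2 r] by simp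
    have "dist (x t) (us, vs) = sqrt ((fst (x t) - us)^2 + (snd (x t) - vs)^2)"
      by (cases "x t") (simp add: dist_Pair_Pair dist_real_def)
    also have "\<dots> \<le> \<bar>fst (x t) - us\<bar> + \<bar>snd (x t) - vs\<bar>" by (rule sqrt_sum_squares_le_sum_abs)
    also have "\<dots> < e" using du dv unfolding r_def by simp
    finally show "dist (x t) (us, vs) < e" .
  qed
qed

end

lemma phi_lower:
  assumes th: "0 < \<theta>" and et: "0 < \<eta>" and u: "0 < u" "u \<le> u2" and u2: "u2 < 1"
  shows "(1/u2) * (1-u2) * \<theta> * \<eta> \<le> phi \<theta> \<eta> u"
proof -
  have i1: "1/u2 \<le> 1/u" using u by (intro divide_left_mono) auto
  have i2: "1-u2 \<le> 1-u" using u by simp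
  have "(1/u2) * (1-u2) \<le> (1/u) * (1-u)"
    by (rule mult_mono[OF i1 i2]) (use u u2 in auto)
  moreover have "\<theta> * \<eta> \<le> (u+\<theta>) * (u^2+\<eta>)" using u th et by (intro mult_mono) auto
  ultimately have "((1/u2) * (1-u2)) * (\<theta> * \<eta>) \<le> ((1/u) * (1-u)) * ((u+\<theta>) * (u^2+\<eta>))"
    by (rule mult_mono) (use u u2 th et in auto)
  then show ?thesis unfolding phi_def by (simp add: mult.assoc)
qed

lemma cont_pt:
  assumes "0 < a" "0 < e"
  shows "\<exists>d>0. \<forall>y. \<bar>y - a\<bar> < d \<longrightarrow> \<bar>phi \<theta> \<eta> y - phi \<theta> \<eta> a\<bar> < e"
proof -
  have "isCont (phi \<theta> \<eta>) a" using phi_deriv[of a \<theta> \<eta>] assms by (intro DERIV_isCont) auto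
  then have H: "\<forall>e>0. \<exists>d>0. \<forall>y. dist y a < d \<longrightarrow> dist (phi \<theta> \<eta> y) (phi \<theta> \<eta> a) < e"
    unfolding continuous_at_eps_delta .
  from H[rule_format, OF assms(2)] show ?thesis unfolding dist_real_def .
qed

theorem theorem6:
  fixes \<delta> \<theta> \<eta> uM :: real
  assumes "0 < \<delta>" "0 < \<theta>" "0 < \<eta>"
    and "region_R \<eta> \<theta>"
    and "fold_max \<theta> \<eta> uM"
    and "\<delta> < 1 / (1 + \<eta>)"
    and "u_star \<delta> \<eta> > uM"
  shows "\<exists>\<epsilon>0>0. \<forall>\<epsilon>. 0 < \<epsilon> \<and> \<epsilon> < \<epsilon>0 \<longrightarrow>
           vfield \<delta> \<theta> \<eta> \<epsilon> (E_star \<delta> \<theta> \<eta>) = (0, 0)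
         \<and> lyap_stable \<delta> \<theta> \<eta> \<epsilon> (E_star \<delta> \<theta> \<eta>)
         \<and> (\<forall>x. is_solution \<delta> \<theta> \<eta> \<epsilon> x \<and> fst (x 0) > 0 \<and> snd (x 0) > 0
               \<longrightarrow> (x \<longlongrightarrow> E_star \<delta> \<theta> \<eta>) at_top)"
proof -
  note \<delta>0 = assms(1) and \<theta>0 = assms(2) and \<eta>0 = assms(3) and fm = assms(5)
  have uM: "0 < uM" "uM < 1" using fm unfolding fold_max_def by auto
  have \<delta>1: "\<delta> < 1" using assms(6) \<eta>0 by (smt (verit) divide_less_eq_1_pos)
  have d1: "\<delta> * (1 + \<eta>) < 1" using assms(6) \<eta>0 by (simp add: field_simps)
  define us where "us = u_star \<delta> \<eta>"
  define vs where "vs = phi \<theta> \<eta> us"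
  have rad: "\<delta> * \<eta> / (1 - \<delta>) > 0" using \<delta>0 \<delta>1 \<eta>0 by simp
  have us0: "us > 0" unfolding us_def u_star_def using rad by simp
  have ussq: "us^2 = \<delta> * \<eta> / (1 - \<delta>)" unfolding us_def u_star_def using rad by simp
  have usq: "us^2 * (1-\<delta>) = \<delta> * \<eta>" using ussq \<delta>1 by simp
  have "us^2 * (1-\<delta>) < 1 * (1-\<delta>)" using usq d1 by (simp add: algebra_simps)
  then have "us^2 < 1" using \<delta>1 by (simp only: mult_less_cancel_right)
  then have us1: "us < 1" using us0 by (simp add: power_less_one_iff abs_square_less_1)
  have uMus: "uM < us" using assms(7) us_def by simp
  note decr = phi_decr[OF \<theta>0 \<eta>0 fm]
  have vs0: "vs > 0" unfolding vs_def using phi_pos[OF us0 us1 \<theta>0 \<eta>0] .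
  have Fb: "phi \<theta> \<eta> u < vs" if "us < u" for u
  proof (cases "u \<le> 1")
    case True then show ?thesis unfolding vs_def using decr[of us u] that uMus by simp
  next
    case False then show ?thesis using phi_neg[of u \<theta> \<eta>] \<theta>0 \<eta>0 vs0 by simp
  qed
  have phiuM: "phi \<theta> \<eta> uM > vs" unfolding vs_def using decr[of uM us] uMus us1 by simp
  obtain e1 where e1: "e1 > 0" "\<And>y. \<bar>y - uM\<bar> < e1 \<Longrightarrow> \<bar>phi \<theta> \<eta> y - phi \<theta> \<eta> uM\<bar> < (phi \<theta> \<eta> uM - vs)/2"
    using cont_pt[of uM "(phi \<theta> \<eta> uM - vs)/2" \<theta> \<eta>] uM phiuM by auto
  define c where "c = max (uM - e1/2) (uM/2)"
  have c: "0 < c" "c < uM" unfolding c_def using uM e1 by auto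
  have Fa: "phi \<theta> \<eta> u > vs" if "c \<le> u" "u < us" for u
  proof (cases "u \<le> uM")
    case True
    then have "\<bar>u - uM\<bar> < e1" using that c_def e1 by (auto simp: abs_if)
    from e1(2)[OF this] have "\<bar>phi \<theta> \<eta> u - phi \<theta> \<eta> uM\<bar> < (phi \<theta> \<eta> uM - vs)/2" .
    then have "phi \<theta> \<eta> uM - phi \<theta> \<eta> u < (phi \<theta> \<eta> uM - vs)/2" unfolding abs_less_iff by linarith
    then have "phi \<theta> \<eta> uM - phi \<theta> \<eta> u < phi \<theta> \<eta> uM/2 - vs/2" by (simp only: diff_divide_distrib)
    then show ?thesis using phiuM by linarith
  next
    case False
    then show ?thesis unfolding vs_def using decr[of u us] that us1 by simp
  qed
  define h where "h = (phi \<theta> \<eta> c + vs)/2"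
  have hc: "vs < h" "h < phi \<theta> \<eta> c" unfolding h_def using Fa[of c] c uMus by auto
  obtain e2 where e2: "e2 > 0" "\<And>y. \<bar>y - us\<bar> < e2 \<Longrightarrow> \<bar>phi \<theta> \<eta> y - phi \<theta> \<eta> us\<bar> < h - vs"
    using cont_pt[of us "h - vs" \<theta> \<eta>] us0 hc by auto
  define u2 where "u2 = max (us - e2/2) (uM/2 + us/2)"
  have u2: "uM < u2" "u2 < us" unfolding u2_def using uMus e2 by auto
  have hu2: "phi \<theta> \<eta> u2 < h"
  proof -
    have "\<bar>u2 - us\<bar> < e2" using u2 unfolding u2_def using e2 by (auto simp: abs_if)
    from e2(2)[OF this] show ?thesis unfolding vs_def by (simp add: abs_less_iff)
  qed
  have Fc: "phi \<theta> \<eta> u \<le> phi \<theta> \<eta> u2" if "u2 \<le> u" "u \<le> 2" for u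
  proof (cases "u \<le> 1")
    case True
    then show ?thesis using decr[of u2 u] that u2 by (cases "u = u2") auto
  next
    case False
    then show ?thesis using phi_neg[of u \<theta> \<eta>] phi_pos[of u2 \<theta> \<eta>] \<theta>0 \<eta>0 u2 uM us1 by simp
  qed
  define \<kappa> where "\<kappa> = (h - phi \<theta> \<eta> u2)/(2 * (2-u2))"
  define L where "L = (1/u2) * (1-u2) * \<theta> * \<eta>"
  have L0: "L > 0" unfolding L_def using u2 us1 uM \<theta>0 \<eta>0 by simp
  have Fd: "L \<le> phi \<theta> \<eta> u" if "0 < u" "u \<le> u2" for u
    unfolding L_def using phi_lower[OF \<theta>0 \<eta>0 that] u2 us1 by simp
  have h0: "h > 0" using hc vs0 by simp
  have \<kappa>0: "\<kappa> > 0" unfolding \<kappa>_def using hu2 u2 us1 by simp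
  define \<epsilon>0 where "\<epsilon>0 = \<kappa> * u2^2 * (h - phi \<theta> \<eta> u2) / (8 * h)"
  have \<epsilon>00: "\<epsilon>0 > 0" unfolding \<epsilon>0_def using \<kappa>0 hu2 h0 u2 uM by simp
  show ?thesis
  proof (intro exI[of _ \<epsilon>0] conjI allI impI \<epsilon>00)
    fix \<epsilon> :: real assume \<epsilon>: "0 < \<epsilon> \<and> \<epsilon> < \<epsilon>0"
    have \<epsilon>small: "4 * \<epsilon> * h < \<kappa> * u2^2 * (h - phi \<theta> \<eta> u2)/2"
    proof -
      have "4 * \<epsilon> * h < 4 * \<epsilon>0 * h" using \<epsilon> h0 by simp
      also have "\<dots> = \<kappa> * u2^2 * (h - phi \<theta> \<eta> u2)/2" unfolding \<epsilon>0_def using h0 by simp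
      finally show ?thesis .
    qed
    have E: "E_star \<delta> \<theta> \<eta> = (us, vs)" unfolding E_star_def us_def vs_def by simp
    note ctx = \<delta>0 \<delta>1 \<theta>0 \<eta>0 conjunct1[OF \<epsilon>] us0 us1 usq vs_def c(1)
      less_trans[OF c(2) u2(1)] u2(2) Fa Fb hc(1) hc(2) hu2 Fc \<kappa>_def L0 Fd \<epsilon>small
    show "vfield \<delta> \<theta> \<eta> \<epsilon> (E_star \<delta> \<theta> \<eta>) = (0, 0)"
    proof -
      have 1: "us * (1-us) * (us+\<theta>) * (us^2+\<eta>) - us^2 * vs = 0"
        using phi_mult[OF us0, of \<theta> \<eta>] unfolding vs_def by simp
      have "us^2 * vs - \<delta> * vs * (us^2+\<eta>) = vs * (us^2 * (1-\<delta>) - \<delta> * \<eta>)" by (simp add: algebra_simps)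
      then have 2: "us^2 * vs - \<delta> * vs * (us^2+\<eta>) = 0" using usq by simp
      show ?thesis unfolding E vfield_def using 1 2 by simp
    qed
    show "lyap_stable \<delta> \<theta> \<eta> \<epsilon> (E_star \<delta> \<theta> \<eta>)"
      unfolding E by (rule lyap[OF ctx])
    fix x assume x: "is_solution \<delta> \<theta> \<eta> \<epsilon> x \<and> fst (x 0) > 0 \<and> snd (x 0) > 0"
    then have sol: "is_solution \<delta> \<theta> \<eta> \<epsilon> x" and u0: "fst (x 0) > 0" and v0: "snd (x 0) > 0" by auto
    obtain t0 where t0: "t0 \<ge> 0" "inT c h u2 \<kappa> (x t0)"
      using T_entry[OF ctx sol u0 v0] by blast
    have allT: "\<And>t. t \<ge> t0 \<Longrightarrow> inT c h u2 \<kappa> (x t)"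
      using T_inv[OF ctx sol u0 v0 t0] by blast
    show "(x \<longlongrightarrow> E_star \<delta> \<theta> \<eta>) at_top"
      unfolding E using conv[OF ctx sol u0 v0 t0(1) allT] .
  qed
qed


end
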